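(* Let $n$ and $b$ be integers with $1\le b<\frac{n}{2}-1$, and let $BT\in\mathcal{CT}^*_{n,b}$. Then \[ M_2(BT)\le\begin{cases} 4n+16b-12 & \text{if } 1\le b\le\frac{n-4}{5},\\ 6n+6b-20 & \text{if } \frac{n-4}{5}<b<\frac{n-2}{3},\\ 10n-6b-28 & \text{if } \frac{n-2}{3}\le b<\frac{3n-4}{7},\\ 16n-20b-36 & \text{if } \frac{3n-4}{7}\le b<\frac{n}{2}-1. \end{cases} \] Equality holds if and only if $BT\in\mathcal{BT}'_1(n,b)$ when $1\le b<\frac{n-2}{3}$, and $BT\in\mathcal{BT}'_2(n,b)$ when $\frac{n-2}{3}\le b<\frac{n}{2}-1$.
   Context: A chemical tree is a tree with maximum degree at most $4$; $d_v$ is the degree of $v$. A pendent vertex has degree $1$; a branching vertex has degree greater than $2$. A pendent path is a path $u_0\cdots u_r$ ($r\ge1$) with $u_0$ pendent, $u_r$ branching and all internal vertices of degree $2$; an internal path is such a path with both end vertices branching and all internal vertices of degree $2$; its length is $r$. $\mathcal{CT}^*_{n,b}$ is the class of all $n$-vertex chemical trees with exactly $b$ branching vertices. For $1\le b<\frac{n-2}{3}$, $\mathcal{BT}_1(n,b)$ is the set of trees in $\mathcal{CT}^*_{n,b}$ whose degree sequence has $b$ entries $4$, $n-3b-2$ entries $2$ and $2b+2$ entries $1$; for $\frac{n-2}{3}\le b<\frac{n}{2}-1$, $\mathcal{BT}_2(n,b)$ is the set of trees in $\mathcal{CT}^*_{n,b}$ whose degree sequence has $n-2b-2$ entries $4$,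 $3b-n+2$ entries $3$ and $n-b$ entries $1$. $\mathcal{BT}'_1(n,b)$ and $\mathcal{BT}'_2(n,b)$ are the subclasses of $\mathcal{BT}_1(n,b)$ and $\mathcal{BT}_2(n,b)$, respectively, of trees satisfying all of: (1) every internal path (if any) has length $1$; (2) if some pendent vertex is adjacent to a vertex of degree $4$, then there are no two adjacent vertices of degree $3$; (3) if some pendent vertex is adjacent to a branching vertex, then there is no pendent path of length greater than $2$; (4) every vertex of degree $3$ (if any) has at most one neighbor of degree $4$; (5) there is at least one vertex of degree $4$ and the subgraph induced by the vertices of degree $4$ is a tree. The second Zagreb index is $M_2(G)=\sum_{uv\in E(G)}d_ud_v$. *)

theory Defs
  imports Complex_Main
begin

definition simple_graph :: "'a set \<Rightarrow> 'a set set \<Rightarrow> bool" where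
  "simple_graph V E \<longleftrightarrow> finite V \<and>
     (\<forall>e\<in>E. \<exists>u v. e = {u, v} \<and> u \<noteq> v \<and> u \<in> V \<and> v \<in> V)"

definition deg :: "'a set set \<Rightarrow> 'a \<Rightarrow> nat" where
  "deg E v = card {u. {u, v} \<in> E}"

definition connected_graph :: "'a set \<Rightarrow> 'a set set \<Rightarrow> bool" where
  "connected_graph V E \<longleftrightarrow>
     (\<forall>u\<in>V. \<forall>v\<in>V. (\<lambda>x y. {x, y} \<in> E)\<^sup>*\<^sup>* u v)"

definition is_tree :: "'a set \<Rightarrow> 'a set set \<Rightarrow> bool" where
  "is_tree V E \<longleftrightarrow> simple_graph V E \<and> V \<noteq> {} \<and> connected_graph V E \<and>
     card E = card V - 1"

definition chemical_tree :: "'a set \<Rightarrow> 'a set set \<Rightarrow> bool" where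
  "chemical_tree V E \<longleftrightarrow> is_tree V E \<and> (\<forall>v\<in>V. deg E v \<le> 4)"

definition branching_vertices :: "'a set \<Rightarrow> 'a set set \<Rightarrow> 'a set" where
  "branching_vertices V E = {v\<in>V. deg E v > 2}"

definition CT_star :: "nat \<Rightarrow> nat \<Rightarrow> 'a set \<Rightarrow> 'a set set \<Rightarrow> bool" where
  "CT_star n b V E \<longleftrightarrow> chemical_tree V E \<and> card V = n \<and>
     card (branching_vertices V E) = b"

definition M2 :: "'a set set \<Rightarrow> nat" where
  "M2 E = (\<Sum>e\<in>E. \<Prod>v\<in>e. deg E v)"

definition n_deg :: "'a set \<Rightarrow> 'a set set \<Rightarrow> nat \<Rightarrow> nat" where
  "n_deg V E k = card {v\<in>V. deg E v = k}"

definition is_path :: "'a set \<Rightarrow> 'a set set \<Rightarrow> 'a list \<Rightarrow> bool" where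
  "is_path V E ps \<longleftrightarrow> length ps \<ge> 2 \<and> distinct ps \<and> set ps \<subseteq> V \<and>
     (\<forall>i. i + 1 < length ps \<longrightarrow> {ps ! i, ps ! (i + 1)} \<in> E)"

definition inner_deg2 :: "'a set set \<Rightarrow> 'a list \<Rightarrow> bool" where
  "inner_deg2 E ps \<longleftrightarrow> (\<forall>i. 0 < i \<and> i + 1 < length ps \<longrightarrow> deg E (ps ! i) = 2)"

definition pendent_path :: "'a set \<Rightarrow> 'a set set \<Rightarrow> 'a list \<Rightarrow> bool" where
  "pendent_path V E ps \<longleftrightarrow> is_path V E ps \<and> deg E (hd ps) = 1 \<and>
     deg E (last ps) > 2 \<and> inner_deg2 E ps"

definition internal_path :: "'a set \<Rightarrow> 'a set set \<Rightarrow> 'a list \<Rightarrow> bool" where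
  "internal_path V E ps \<longleftrightarrow> is_path V E ps \<and> deg E (hd ps) > 2 \<and>
     deg E (last ps) > 2 \<and> inner_deg2 E ps"

definition path_len :: "'a list \<Rightarrow> nat" where
  "path_len ps = length ps - 1"

definition BT1 :: "nat \<Rightarrow> nat \<Rightarrow> 'a set \<Rightarrow> 'a set set \<Rightarrow> bool" where
  "BT1 n b V E \<longleftrightarrow> CT_star n b V E \<and>
     int (n_deg V E 4) = int b \<and> int (n_deg V E 2) = int n - 3 * int b - 2 \<and>
     int (n_deg V E 1) = 2 * int b + 2"

definition BT2 :: "nat \<Rightarrow> nat \<Rightarrow> 'a set \<Rightarrow> 'a set set \<Rightarrow> bool" where
  "BT2 n b V E \<longleftrightarrow> CT_star n b V E \<and>
     int (n_deg V E 4) = int n - 2 * int b - 2 \<and>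
     int (n_deg V E 3) = 3 * int b - int n + 2 \<and>
     int (n_deg V E 1) = int n - int b"

definition prime_conditions :: "'a set \<Rightarrow> 'a set set \<Rightarrow> bool" where
  "prime_conditions V E \<longleftrightarrow>
     \<comment> \<open>(1)\<close>
     (\<forall>ps. internal_path V E ps \<longrightarrow> path_len ps = 1) \<and>
     \<comment> \<open>(2)\<close>
     ((\<exists>u\<in>V. \<exists>v\<in>V. {u, v} \<in> E \<and> deg E u = 1 \<and> deg E v = 4) \<longrightarrow>
        \<not> (\<exists>u\<in>V. \<exists>v\<in>V. {u, v} \<in> E \<and> deg E u = 3 \<and> deg E v = 3)) \<and>
     \<comment> \<open>(3)\<close>
     ((\<exists>u\<in>V. \<exists>v\<in>V. {u, v} \<in> E \<and> deg E u = 1 \<and> deg E v > 2) \<longrightarrow>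
        \<not> (\<exists>ps. pendent_path V E ps \<and> path_len ps > 2)) \<and>
     \<comment> \<open>(4)\<close>
     (\<forall>v\<in>V. deg E v = 3 \<longrightarrow> card {u\<in>V. {u, v} \<in> E \<and> deg E u = 4} \<le> 1) \<and>
     \<comment> \<open>(5)\<close>
     ((\<exists>v\<in>V. deg E v = 4) \<and>
        is_tree {v\<in>V. deg E v = 4} {e\<in>E. e \<subseteq> {v\<in>V. deg E v = 4}})"

definition BT1' :: "nat \<Rightarrow> nat \<Rightarrow> 'a set \<Rightarrow> 'a set set \<Rightarrow> bool" where
  "BT1' n b V E \<longleftrightarrow> BT1 n b V E \<and> prime_conditions V E"

definition BT2' :: "nat \<Rightarrow> nat \<Rightarrow> 'a set \<Rightarrow> 'a set set \<Rightarrow> bool" where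
  "BT2' n b V E \<longleftrightarrow> BT2 n b V E \<and> prime_conditions V E"

definition M2_bound :: "nat \<Rightarrow> nat \<Rightarrow> int" where
  "M2_bound n b =
    (if real b \<le> (real n - 4) / 5 then 4 * int n + 16 * int b - 12
     else if real b < (real n - 2) / 3 then 6 * int n + 6 * int b - 20
     else if real b < (3 * real n - 4) / 7 then 10 * int n - 6 * int b - 28
     else 16 * int n - 20 * int b - 36)"

end

theory Submission
  imports Defs
begin

definition nb :: "'a set set \<Rightarrow> 'a \<Rightarrow> 'a set" where
  "nb E v = {u. {u, v} \<in> E}"

definition Esub :: "'a set set \<Rightarrow> 'a set \<Rightarrow> 'a set set" where
  "Esub E S = {e\<in>E. e \<subseteq> S}"

lemma deg_nb: "deg E v = card (nb E v)"
  by (simp add: deg_def nb_def)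

lemma nb_sym: "u \<in> nb E v \<longleftrightarrow> v \<in> nb E u"
  by (simp add: nb_def insert_commute)

lemma sg_fin: "simple_graph V E \<Longrightarrow> finite V"
  by (simp add: simple_graph_def)

lemma sg_edge: "simple_graph V E \<Longrightarrow> e \<in> E \<Longrightarrow> \<exists>u v. e = {u, v} \<and> u \<noteq> v \<and> u \<in> V \<and> v \<in> V"
  by (simp add: simple_graph_def)

lemma sg_sub: "simple_graph V E \<Longrightarrow> e \<in> E \<Longrightarrow> e \<subseteq> V"
  using sg_edge by fastforce

lemma sg_finE: "simple_graph V E \<Longrightarrow> finite E"
proof -
  assume s: "simple_graph V E"
  have "E \<subseteq> Pow V" using sg_sub[OF s] by blast
  thus ?thesis using sg_fin[OF s] finite_subset by blast
qed

lemma sg_adj: "simple_graph V E \<Longrightarrow> {u, v} \<in> E \<Longrightarrow> u \<in> V \<and> v \<in> V \<and> u \<noteq> v"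
proof -
  assume s: "simple_graph V E" and e: "{u, v} \<in> E"
  obtain a b where "{u,v} = {a,b}" "a \<noteq> b" "a \<in> V" "b \<in> V" using sg_edge[OF s e] by blast
  thus ?thesis by (metis doubleton_eq_iff)
qed

lemma nb_sub: "simple_graph V E \<Longrightarrow> nb E v \<subseteq> V"
  using sg_adj by (fastforce simp: nb_def)

lemma nb_fin: "simple_graph V E \<Longrightarrow> finite (nb E v)"
  using nb_sub sg_fin finite_subset by metis

lemma nb_irr: "simple_graph V E \<Longrightarrow> v \<notin> nb E v"
  unfolding nb_def using sg_adj[of V E v v] by auto

lemma DC:
  fixes h :: "'a \<Rightarrow> 'a set \<Rightarrow> 'b::comm_monoid_add"
  assumes s: "simple_graph V E"
  shows "(\<Sum>e\<in>E. \<Sum>v\<in>e. h v e) = (\<Sum>v\<in>V. \<Sum>u\<in>nb E v. h v {u, v})"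
proof -
  have fV: "finite V" and fE: "finite E" using sg_fin[OF s] sg_finE[OF s] .
  have "(\<Sum>e\<in>E. \<Sum>v\<in>e. h v e) = (\<Sum>e\<in>E. \<Sum>v\<in>{v\<in>V. v \<in> e}. h v e)"
  proof (rule sum.cong)
    fix e assume "e \<in> E"
    hence "{v\<in>V. v \<in> e} = e" using sg_sub[OF s] by blast
    thus "(\<Sum>v\<in>e. h v e) = (\<Sum>v\<in>{v\<in>V. v \<in> e}. h v e)" by simp
  qed simp
  also have "\<dots> = (\<Sum>v\<in>V. \<Sum>e\<in>{e\<in>E. v \<in> e}. h v e)"
    using sum.swap_restrict[OF fE fV, of "\<lambda>e v. h v e" "\<lambda>e v. v \<in> e"] by simp
  also have "\<dots> = (\<Sum>v\<in>V. \<Sum>u\<in>nb E v. h v {u, v})"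
  proof (rule sum.cong)
    fix v assume v: "v \<in> V"
    have eq: "{e\<in>E. v \<in> e} = (\<lambda>u. {u, v}) ` nb E v"
    proof
      show "{e\<in>E. v \<in> e} \<subseteq> (\<lambda>u. {u, v}) ` nb E v"
      proof
        fix e assume "e \<in> {e\<in>E. v \<in> e}"
        then obtain a b where ab: "e = {a,b}" "e \<in> E" "v \<in> e" using sg_edge[OF s] by blast
        show "e \<in> (\<lambda>u. {u, v}) ` nb E v"
        proof (cases "v = a")
          case True thus ?thesis using ab by (auto simp: nb_def insert_commute)
        next
          case False hence "v = b" using ab by auto
          thus ?thesis using ab by (auto simp: nb_def)
        qed
      qed
    qed (auto simp: nb_def)
    have inj: "inj_on (\<lambda>u. {u, v}) (nb E v)"
      by (rule inj_onI) (metis doubleton_eq_iff nb_irr[OF s])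
    show "(\<Sum>e\<in>{e\<in>E. v \<in> e}. h v e) = (\<Sum>u\<in>nb E v. h v {u, v})"
      unfolding eq by (simp add: sum.reindex[OF inj])
  qed simp
  finally show ?thesis .
qed

lemma handshake:
  assumes s: "simple_graph V E"
  shows "(\<Sum>v\<in>V. deg E v) = 2 * card E"
proof -
  have "(\<Sum>e\<in>E. \<Sum>v\<in>e. (1::nat)) = (\<Sum>v\<in>V. \<Sum>u\<in>nb E v. (1::nat))"
    by (rule DC[OF s])
  moreover have "(\<Sum>e\<in>E. \<Sum>v\<in>e. (1::nat)) = (\<Sum>e\<in>E. 2)"
  proof (rule sum.cong)
    fix e assume "e \<in> E"
    then obtain a b where "e = {a,b}" "a \<noteq> b" using sg_edge[OF s] by blast
    thus "(\<Sum>v\<in>e. (1::nat)) = 2" by simp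
  qed simp
  ultimately show ?thesis by (simp add: deg_nb mult.commute)
qed

lemma sg_Esub: "simple_graph V E \<Longrightarrow> S \<subseteq> V \<Longrightarrow> simple_graph S (Esub E S)"
  unfolding simple_graph_def Esub_def using finite_subset by fastforce

lemma nb_Esub: "nb (Esub E S) v = (if v \<in> S then nb E v \<inter> S else {})"
  by (auto simp: nb_def Esub_def)

lemma closure_all:
  assumes t: "is_tree V E" and S: "S \<subseteq> V" "x \<in> S"
    and cl: "\<And>y z. y \<in> S \<Longrightarrow> {y, z} \<in> E \<Longrightarrow> z \<in> S"
  shows "S = V"
proof -
  have c: "connected_graph V E" using t by (simp add: is_tree_def)
  have "w \<in> S" if "w \<in> V" for w
  proof -
    have "(\<lambda>x y. {x, y} \<in> E)\<^sup>*\<^sup>* x w" using c S that by (auto simp: connected_graph_def)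
    thus ?thesis
      by (induction rule: rtranclp_induct) (use S cl in auto)
  qed
  thus ?thesis using S by blast
qed

lemma deg_pos:
  assumes t: "is_tree V E" and v: "v \<in> V" and w: "w \<in> V" "w \<noteq> v"
  shows "deg E v \<ge> 1"
proof -
  have s: "simple_graph V E" using t by (simp add: is_tree_def)
  have "(\<lambda>x y. {x, y} \<in> E)\<^sup>*\<^sup>* v w" using t v w by (auto simp: is_tree_def connected_graph_def)
  then obtain u where "{v, u} \<in> E"
    using w(2) by (cases rule: converse_rtranclpE) auto
  hence "u \<in> nb E v" by (simp add: nb_def insert_commute)
  thus ?thesis using nb_fin[OF s] by (simp add: deg_nb card_gt_0_iff Suc_le_eq) blast
qed

lemma deg_eq_nb:
  assumes s: "simple_graph V E" and "deg E x = card A" and "A \<subseteq> nb E x" and "finite A"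
  shows "nb E x = A"
  using assms nb_fin[OF s] by (metis card_subset_eq deg_nb)

lemma leaf_nb:
  assumes s: "simple_graph V E" and d: "deg E x = 1" and e: "{x, y} \<in> E"
  shows "nb E x = {y}"
  using deg_eq_nb[OF s, of x "{y}"] d e by (simp add: nb_def insert_commute)

lemma tree_sg: "is_tree V E \<Longrightarrow> simple_graph V E"
  by (simp add: is_tree_def)

lemma leaf_exists:
  assumes t: "is_tree V E" and c: "card V \<ge> 2"
  shows "\<exists>l\<in>V. deg E l = 1"
proof (rule ccontr)
  assume na: "\<not> ?thesis"
  have s: "simple_graph V E" using t by (simp add: is_tree_def)
  have fV: "finite V" using sg_fin[OF s] .
  have ge2: "deg E v \<ge> 2" if v: "v \<in> V" for v
  proof -
    obtain w where "w \<in> V" "w \<noteq> v"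
    proof -
      have "V - {v} \<noteq> {}"
      proof
        assume "V - {v} = {}" hence "V \<subseteq> {v}" by blast
        hence "card V \<le> 1" using card_mono[of "{v}" V] by simp
        thus False using c by simp
      qed
      thus ?thesis using that by blast
    qed
    hence "deg E v \<ge> 1" using deg_pos[OF t v] by blast
    thus ?thesis using na v by force
  qed
  have "(\<Sum>v\<in>V. 2) \<le> (\<Sum>v\<in>V. deg E v)" by (rule sum_mono) (use ge2 in auto)
  hence "2 * card V \<le> 2 * card E" using handshake[OF s] by (simp add: mult.commute)
  moreover have "card E = card V - 1" using t by (simp add: is_tree_def)
  moreover have "card V \<ge> 1" using c by simp
  ultimately show False by linarith
qed

lemma leaf_remove:
  assumes t: "is_tree V E" and l: "l \<in> V" "deg E l = 1" and p: "{l, p} \<in> E" and c: "card V \<ge> 2"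
  shows "is_tree (V - {l}) {e\<in>E. l \<notin> e}" "E = insert {l,p} {e\<in>E. l \<notin> e}" "{l,p} \<notin> {e\<in>E. l \<notin> e}"
proof -
  have s: "simple_graph V E" using t by (simp add: is_tree_def)
  have nbl: "nb E l = {p}" using leaf_nb[OF s l(2) p] .
  have lp: "l \<noteq> p" "p \<in> V" using sg_adj[OF s p] by auto
  show eq: "E = insert {l,p} {e\<in>E. l \<notin> e}"
  proof
    show "E \<subseteq> insert {l,p} {e\<in>E. l \<notin> e}"
    proof
      fix e assume e: "e \<in> E"
      then obtain a b where ab: "e = {a,b}" using sg_edge[OF s] by blast
      show "e \<in> insert {l,p} {e\<in>E. l \<notin> e}"
      proof (cases "l \<in> e")
        case True
        hence "l = a \<or> l = b" using ab by auto
        hence "e = {l,p}"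
        proof
          assume "l = a" hence "b \<in> nb E l" using e ab by (simp add: nb_def insert_commute)
          thus ?thesis using nbl ab \<open>l = a\<close> by auto
        next
          assume "l = b" hence "a \<in> nb E l" using e ab by (simp add: nb_def)
          thus ?thesis using nbl ab \<open>l = b\<close> by auto
        qed
        thus ?thesis by simp
      qed (use e in auto)
    qed
  qed (use p in auto)
  show nin: "{l,p} \<notin> {e\<in>E. l \<notin> e}" by simp
  have fE: "finite E" using sg_finE[OF s] .
  have cE: "card {e\<in>E. l \<notin> e} = card E - 1"
    using eq nin fE by (metis card_insert_disjoint diff_Suc_1 finite_insert)
  have sg': "simple_graph (V - {l}) {e\<in>E. l \<notin> e}"
    using s unfolding simple_graph_def by fastforce
  have ne: "V - {l} \<noteq> {}" using lp l by auto
  have conn: "connected_graph (V - {l}) {e\<in>E. l \<notin> e}"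
    unfolding connected_graph_def
  proof (intro ballI)
    fix u w assume u: "u \<in> V - {l}" and w: "w \<in> V - {l}"
    let ?R = "\<lambda>x y. {x, y} \<in> {e\<in>E. l \<notin> e}"
    have "(\<lambda>x y. {x, y} \<in> E)\<^sup>*\<^sup>* u w" using t u w by (auto simp: is_tree_def connected_graph_def)
    have "(x \<noteq> l \<longrightarrow> ?R\<^sup>*\<^sup>* u x) \<and> (x = l \<longrightarrow> ?R\<^sup>*\<^sup>* u p)" if "(\<lambda>x y. {x, y} \<in> E)\<^sup>*\<^sup>* u x" for x
      using that
    proof (induction rule: rtranclp_induct)
      case base thus ?case using u by auto
    next
      case (step y z)
      show ?case
      proof (cases "z = l")
        case True
        hence "y \<in> nb E l" using step(2) by (simp add: nb_def)
        hence "y = p" using nbl by simp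
        thus ?thesis using step(3) True lp by auto
      next
        case False
        show ?thesis
        proof (cases "y = l")
          case True
          hence "z \<in> nb E l" using step(2) by (simp add: nb_def insert_commute)
          hence "z = p" using nbl by simp
          thus ?thesis using step(3) True by auto
        next
          case False
          hence "?R y z" using step(2) \<open>z \<noteq> l\<close> by simp
          thus ?thesis using step(3) False \<open>z \<noteq> l\<close> by (meson rtranclp.rtrancl_into_rtrancl)
        qed
      qed
    qed
    thus "?R\<^sup>*\<^sup>* u w" using \<open>(\<lambda>x y. {x, y} \<in> E)\<^sup>*\<^sup>* u w\<close> w by blast
  qed
  have cV: "card (V - {l}) = card V - 1" using l sg_fin[OF s] by simp
  show "is_tree (V - {l}) {e\<in>E. l \<notin> e}"
    unfolding is_tree_def using sg' ne conn cE cV t by (simp add: is_tree_def)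
qed

lemma Esub_mono_conn:
  assumes "(\<lambda>x y. {x, y} \<in> A)\<^sup>*\<^sup>* u v" and "A \<subseteq> B"
  shows "(\<lambda>x y. {x, y} \<in> B)\<^sup>*\<^sup>* u v"
  using assms(1) by (induction rule: rtranclp_induct) (use assms(2) in \<open>auto intro: rtranclp.rtrancl_into_rtrancl\<close>)

lemma forest_aux:
  "card V = N \<Longrightarrow> is_tree V E \<Longrightarrow> S \<subseteq> V \<Longrightarrow> S \<noteq> {} \<Longrightarrow>
   card (Esub E S) + 1 \<le> card S \<and> (card (Esub E S) + 1 = card S \<longrightarrow> connected_graph S (Esub E S))"
proof (induction N arbitrary: V E S)
  case 0
  hence "finite V" using sg_fin tree_sg by blast
  hence "V = {}" using 0 by simp
  thus ?case using 0 by simp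
next
  case (Suc N)
  have s: "simple_graph V E" using Suc.prems tree_sg by blast
  have fV: "finite V" using sg_fin[OF s] .
  show ?case
  proof (cases "N = 0")
    case True
    then obtain x where Vx: "V = {x}" using Suc.prems(1) card_1_singletonE by auto
    hence Sx: "S = {x}" using Suc.prems by auto
    have "Esub E S = {}"
    proof (rule ccontr)
      assume "Esub E S \<noteq> {}"
      then obtain e where "e \<in> E" "e \<subseteq> {x}" using Sx by (auto simp: Esub_def)
      thus False using sg_edge[OF s] by fastforce
    qed
    thus ?thesis using Sx by (simp add: connected_graph_def)
  next
    case False
    hence c2: "card V \<ge> 2" using Suc.prems(1) by simp
    obtain l where l: "l \<in> V" "deg E l = 1" using leaf_exists[OF Suc.prems(2) c2] by blast
    obtain p where p: "{l, p} \<in> E"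
    proof -
      have "nb E l \<noteq> {}" using l by (auto simp: deg_nb)
      thus ?thesis using that by (auto simp: nb_def insert_commute)
    qed
    have nbl: "nb E l = {p}" using leaf_nb[OF s l(2) p] .
    have lp: "l \<noteq> p" "p \<in> V" using sg_adj[OF s p] by auto
    let ?V = "V - {l}" and ?E = "{e\<in>E. l \<notin> e}"
    have t': "is_tree ?V ?E" and Eeq: "E = insert {l,p} ?E" and nin: "{l,p} \<notin> ?E"
      using leaf_remove[OF Suc.prems(2) l p c2] by auto
    have cV': "card ?V = N" using Suc.prems(1) l fV by simp
    have fE': "finite ?E" using sg_finE[OF tree_sg[OF t']] .
    show ?thesis
    proof (cases "l \<in> S")
      case False
      hence "S \<subseteq> ?V" using Suc.prems by auto
      moreover have "Esub E S = Esub ?E S" using False by (auto simp: Esub_def)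
      ultimately show ?thesis using Suc.IH[OF cV' t' _ Suc.prems(4)] by simp
    next
      case True
      show ?thesis
      proof (cases "S = {l}")
        case True
        have "Esub E S = {}"
        proof (rule ccontr)
          assume "Esub E S \<noteq> {}"
          then obtain e where "e \<in> E" "e \<subseteq> {l}" using True by (auto simp: Esub_def)
          thus False using sg_edge[OF s] by fastforce
        qed
        thus ?thesis using True by (simp add: connected_graph_def)
      next
        case False
        let ?S = "S - {l}"
        have S': "?S \<subseteq> ?V" "?S \<noteq> {}" using Suc.prems(3) False \<open>l \<in> S\<close> by auto
        have IH: "card (Esub ?E ?S) + 1 \<le> card ?S \<and>
          (card (Esub ?E ?S) + 1 = card ?S \<longrightarrow> connected_graph ?S (Esub ?E ?S))"
          using Suc.IH[OF cV' t' S'] .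
        have fS: "finite S" using Suc.prems(3) fV finite_subset by blast
        have cS: "card ?S = card S - 1" using fS \<open>l \<in> S\<close> by simp
        have cSpos: "card S \<ge> 1" using fS \<open>l \<in> S\<close> using card_gt_0_iff[of S] by (simp add: Suc_le_eq) blast
        have Esplit: "Esub E S = Esub ?E ?S \<union> (if p \<in> S then {{l,p}} else {})"
        proof
          show "Esub E S \<subseteq> Esub ?E ?S \<union> (if p \<in> S then {{l,p}} else {})"
          proof
            fix e assume e: "e \<in> Esub E S"
            show "e \<in> Esub ?E ?S \<union> (if p \<in> S then {{l,p}} else {})"
            proof (cases "l \<in> e")
              case True
              hence "e = {l,p}" using e Eeq by (auto simp: Esub_def)
              thus ?thesis using e by (auto simp: Esub_def)
            next
              case False thus ?thesis using e by (auto simp: Esub_def)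
            qed
          qed
        next
          show "Esub ?E ?S \<union> (if p \<in> S then {{l,p}} else {}) \<subseteq> Esub E S"
            using \<open>l \<in> S\<close> p by (auto simp: Esub_def)
        qed
        have fEs: "finite (Esub ?E ?S)" using fE' unfolding Esub_def by (rule rev_finite_subset) blast
        have disj: "{l,p} \<notin> Esub ?E ?S" by (simp add: Esub_def)
        have cE: "card (Esub E S) = card (Esub ?E ?S) + (if p \<in> S then 1 else 0)"
        proof (cases "p \<in> S")
          case True thus ?thesis unfolding Esplit using fEs disj by simp
        next
          case False thus ?thesis unfolding Esplit by simp
        qed
        have part1: "card (Esub E S) + 1 \<le> card S" using cE IH cS cSpos by (auto split: if_splits)
        have part2: "connected_graph S (Esub E S)" if eqc: "card (Esub E S) + 1 = card S"
        proof -
          have pS: "p \<in> S" using eqc cE IH cS cSpos by (auto split: if_splits)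
          have eq2: "card (Esub ?E ?S) + 1 = card ?S" using eqc cE pS cS cSpos by auto
          have conn: "connected_graph ?S (Esub ?E ?S)" using IH eq2 by blast
          have sub: "Esub ?E ?S \<subseteq> Esub E S" using Esplit by blast
          have lpE: "{l,p} \<in> Esub E S" using Esplit pS by auto
          let ?R = "\<lambda>x y. {x, y} \<in> Esub E S"
          have toP: "?R\<^sup>*\<^sup>* x p" if x: "x \<in> S" for x
          proof (cases "x = l")
            case True thus ?thesis using lpE by (simp add: r_into_rtranclp)
          next
            case False
            hence "x \<in> ?S" "p \<in> ?S" using x pS lp by auto
            hence "(\<lambda>x y. {x, y} \<in> Esub ?E ?S)\<^sup>*\<^sup>* x p" using conn by (simp add: connected_graph_def)
            thus ?thesis by (rule Esub_mono_conn[OF _ sub])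
          qed
          have sym: "symp ?R" by (simp add: symp_def insert_commute)
          show ?thesis unfolding connected_graph_def
          proof (intro ballI)
            fix u v assume "u \<in> S" "v \<in> S"
            hence "?R\<^sup>*\<^sup>* u p" "?R\<^sup>*\<^sup>* v p" using toP by auto
            moreover have "?R\<^sup>*\<^sup>* p v" using \<open>?R\<^sup>*\<^sup>* v p\<close> sym
              by (metis symp_rtranclp sympD)
            ultimately show "?R\<^sup>*\<^sup>* u v" by auto
          qed
        qed
        show ?thesis using part1 part2 by blast
      qed
    qed
  qed
qed

lemma forest:
  assumes "is_tree V E" "S \<subseteq> V" "S \<noteq> {}"
  shows "card (Esub E S) + 1 \<le> card S"
    and "card (Esub E S) + 1 = card S \<Longrightarrow> connected_graph S (Esub E S)"
  using forest_aux[OF refl assms] by auto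

lemma dnth: "distinct xs \<Longrightarrow> i < length xs \<Longrightarrow> j < length xs \<Longrightarrow> i \<noteq> j \<Longrightarrow> xs ! i \<noteq> xs ! j"
  by (simp add: nth_eq_iff_index_eq)

lemma path_rev:
  assumes "is_path V E ps" shows "is_path V E (rev ps)"
proof -
  let ?L = "length ps"
  have "{rev ps ! i, rev ps ! (i + 1)} \<in> E" if i: "i + 1 < length (rev ps)" for i
  proof -
    have lt: "?L - 2 - i + 1 < ?L" using i by simp
    have e: "{ps ! (?L - 2 - i), ps ! (?L - 2 - i + 1)} \<in> E"
      using assms lt unfolding is_path_def by blast
    have k: "?L - Suc i = ?L - 2 - i + 1" "?L - Suc (i+1) = ?L - 2 - i" using i by auto
    have "rev ps ! i = ps ! (?L - 2 - i + 1)" using i k by (simp add: rev_nth)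
    moreover have "rev ps ! (i + 1) = ps ! (?L - 2 - i)" using i k by (simp add: rev_nth)
    ultimately show ?thesis using e by (simp add: insert_commute)
  qed
  thus ?thesis using assms unfolding is_path_def by simp
qed

lemma inner_rev:
  assumes "inner_deg2 E ps" shows "inner_deg2 E (rev ps)"
  unfolding inner_deg2_def
proof (intro allI impI)
  fix i assume i: "0 < i \<and> i + 1 < length (rev ps)"
  have "rev ps ! i = ps ! (length ps - Suc i)" using i by (simp add: rev_nth)
  moreover have "0 < length ps - Suc i \<and> length ps - Suc i + 1 < length ps" using i by auto
  ultimately show "deg E (rev ps ! i) = 2" using assms unfolding inner_deg2_def by metis
qed

lemma path_cons:
  assumes p: "is_path V E ps" and z: "z \<in> V" "z \<notin> set ps" and e: "{z, hd ps} \<in> E"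
  shows "is_path V E (z # ps)"
proof -
  have ne: "ps \<noteq> []" using p by (auto simp: is_path_def)
  have "{(z # ps) ! i, (z # ps) ! (i + 1)} \<in> E" if "i + 1 < length (z # ps)" for i
  proof (cases i)
    case 0 thus ?thesis using e ne by (simp add: hd_conv_nth)
  next
    case (Suc j) thus ?thesis using p that by (simp add: is_path_def)
  qed
  thus ?thesis using p z unfolding is_path_def by auto
qed

lemma inner_cons:
  assumes "inner_deg2 E ps" "ps \<noteq> []" "deg E (hd ps) = 2"
  shows "inner_deg2 E (z # ps)"
  unfolding inner_deg2_def
proof (intro allI impI)
  fix i assume i: "0 < i \<and> i + 1 < length (z # ps)"
  then obtain j where j: "i = Suc j" by (cases i) auto
  show "deg E ((z # ps) ! i) = 2"
  proof (cases j)
    case 0 thus ?thesis using j assms by (simp add: hd_conv_nth)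
  next
    case (Suc k) thus ?thesis using j i assms(1) unfolding inner_deg2_def by auto
  qed
qed

lemma path_take:
  assumes "is_path V E ps" "2 \<le> k" "k \<le> length ps"
  shows "is_path V E (take k ps)"
  using assms unfolding is_path_def by (auto dest: in_set_takeD)

lemma path_edge: "is_path V E ps \<Longrightarrow> i + 1 < length ps \<Longrightarrow> {ps ! i, ps ! (i + 1)} \<in> E"
  by (simp add: is_path_def)

lemma PO:
  assumes t: "is_tree V E" and S: "S \<subseteq> V" and eS: "card (Esub E S) + 1 = card S"
    and p: "is_path V E ps" and L: "length ps \<ge> 3"
    and h: "hd ps \<in> S" and la: "last ps \<in> S"
    and inn: "\<And>i. 0 < i \<Longrightarrow> i + 1 < length ps \<Longrightarrow> ps ! i \<notin> S"
  shows False
proof -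
  let ?L = "length ps"
  have s: "simple_graph V E" using t by (simp add: is_tree_def)
  have fV: "finite V" using sg_fin[OF s] .
  have fE: "finite E" using sg_finE[OF s] .
  have dist: "distinct ps" and sp: "set ps \<subseteq> V" using p by (auto simp: is_path_def)
  define T where "T = S \<union> set ps"
  have TV: "T \<subseteq> V" using S sp by (auto simp: T_def)
  have fS: "finite S" using S fV finite_subset by blast
  have h0: "hd ps = ps ! 0" and lL: "last ps = ps ! (?L - 1)" proof -
    have ne: "ps \<noteq> []" using L by auto
    show "hd ps = ps ! 0" using ne by (simp add: hd_conv_nth)
    show "last ps = ps ! (length ps - 1)" using ne by (simp add: last_conv_nth)
  qed
  have Sint: "S \<inter> set ps = {ps ! 0, ps ! (?L - 1)}"
  proof
    show "S \<inter> set ps \<subseteq> {ps ! 0, ps ! (?L - 1)}"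
    proof
      fix x assume x: "x \<in> S \<inter> set ps"
      then obtain i where i: "i < ?L" "x = ps ! i" by (auto simp: in_set_conv_nth)
      have "\<not> (0 < i \<and> i + 1 < ?L)" using inn x i by auto
      hence "i = 0 \<or> i = ?L - 1" using i by auto
      thus "x \<in> {ps ! 0, ps ! (?L - 1)}" using i by auto
    qed
  next
    have "ps ! 0 \<in> set ps" "ps ! (?L - 1) \<in> set ps" using L by (auto intro!: nth_mem)
    thus "{ps ! 0, ps ! (?L - 1)} \<subseteq> S \<inter> set ps" using h la h0 lL L by auto
  qed
  have neq: "ps ! 0 \<noteq> ps ! (?L - 1)" by (rule dnth[OF dist]) (use L in auto)
  have cT: "card T = card S + ?L - 2"
  proof -
    have "card T = card S + card (set ps) - card (S \<inter> set ps)"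
      unfolding T_def using card_Un_Int[OF fS finite_set[of ps]] by simp
    thus ?thesis using Sint neq distinct_card[OF dist] by simp
  qed
  define PE where "PE = (\<lambda>i. {ps ! i, ps ! (i + 1)}) ` {..<?L - 1}"
  have inj: "inj_on (\<lambda>i. {ps ! i, ps ! (i + 1)}) {..<?L - 1}"
  proof (rule inj_onI)
    fix i j assume i: "i \<in> {..<?L - 1}" and j: "j \<in> {..<?L - 1}" and eq: "{ps ! i, ps ! (i + 1)} = {ps ! j, ps ! (j + 1)}"
    have ii: "i < ?L" "i + 1 < ?L" "j < ?L" "j + 1 < ?L" using i j by auto
    show "i = j"
    proof (rule ccontr)
      assume ne: "i \<noteq> j"
      have m1: "ps ! i \<in> {ps ! j, ps ! (j + 1)}" using eq by blast
      have "ps ! i \<noteq> ps ! j" by (rule dnth[OF dist]) (use ii ne in auto)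
      hence "ps ! i = ps ! (j + 1)" using m1 by simp
      hence ij: "i = j + 1" using dnth[OF dist, of i "j+1"] ii by fastforce
      have m2: "ps ! (i + 1) \<in> {ps ! j, ps ! (j + 1)}" using eq by blast
      have "ps ! (i + 1) \<noteq> ps ! j" by (rule dnth[OF dist]) (use ii ij in auto)
      moreover have "ps ! (i + 1) \<noteq> ps ! (j + 1)" by (rule dnth[OF dist]) (use ii ij in auto)
      ultimately show False using m2 by simp
    qed
  qed
  have cPE: "card PE = ?L - 1" unfolding PE_def using card_image[OF inj] by simp
  have PEsub: "PE \<subseteq> Esub E T"
    unfolding PE_def Esub_def T_def using p by (auto simp: is_path_def)
  have PEdisj: "PE \<inter> Esub E S = {}"
  proof -
    have "\<not> {ps ! i, ps ! (i + 1)} \<subseteq> S" if "i < ?L - 1" for i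
    proof (cases i)
      case 0 thus ?thesis using inn[of 1] L by auto
    next
      case (Suc k) thus ?thesis using inn[of i] that by auto
    qed
    thus ?thesis unfolding PE_def Esub_def by auto
  qed
  have ESsub: "Esub E S \<subseteq> Esub E T" by (auto simp: Esub_def T_def)
  have fET: "finite (Esub E T)" using fE by (simp add: Esub_def)
  have "card (Esub E S \<union> PE) = card (Esub E S) + card PE"
    by (rule card_Un_disjoint) (use fET ESsub PEsub PEdisj finite_subset in auto)
  moreover have "card (Esub E S \<union> PE) \<le> card (Esub E T)"
    by (rule card_mono[OF fET]) (use ESsub PEsub in auto)
  moreover have "card (Esub E T) + 1 \<le> card T"
    by (rule forest(1)[OF t TV]) (use h in \<open>auto simp: T_def\<close>)
  ultimately show False using cT cPE eS L by linarith
qed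

lemma Esub_card1:
  assumes s: "simple_graph V E" and e: "{a, b} \<in> E"
  shows "card (Esub E {a, b}) + 1 = card {a, b}"
proof -
  have ab: "a \<noteq> b" using sg_adj[OF s e] by simp
  have "Esub E {a, b} = {{a, b}}"
  proof
    show "Esub E {a, b} \<subseteq> {{a, b}}"
    proof
      fix x assume x: "x \<in> Esub E {a, b}"
      have xE: "x \<in> E" "x \<subseteq> {a,b}" using x by (auto simp: Esub_def)
      then obtain u v where uv: "x = {u, v}" "u \<noteq> v" using sg_edge[OF s] by blast
      hence "x = {a, b}" using xE(2) by fastforce
      thus "x \<in> {{a, b}}" by simp
    qed
  qed (use e in \<open>auto simp: Esub_def\<close>)
  thus ?thesis using ab by simp
qed

lemma cycle_free:
  assumes t: "is_tree V E" and p: "is_path V E ps" and L: "length ps \<ge> 3" and e: "{hd ps, last ps} \<in> E"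
  shows False
proof -
  have s: "simple_graph V E" using t by (simp add: is_tree_def)
  have dist: "distinct ps" using p by (simp add: is_path_def)
  have h0: "hd ps = ps ! 0" and lL: "last ps = ps ! (length ps - 1)" proof -
    have ne: "ps \<noteq> []" using L by auto
    show "hd ps = ps ! 0" using ne by (simp add: hd_conv_nth)
    show "last ps = ps ! (length ps - 1)" using ne by (simp add: last_conv_nth)
  qed
  show False
  proof (rule PO[OF t _ Esub_card1[OF s e] p L])
    show "{hd ps, last ps} \<subseteq> V" using sg_adj[OF s e] by auto
    show "ps ! i \<notin> {hd ps, last ps}" if "0 < i" "i + 1 < length ps" for i
    proof -
      have a: "ps ! i \<noteq> ps ! 0" by (rule dnth[OF dist]) (use that in auto)
      have b: "ps ! i \<noteq> ps ! (length ps - 1)" by (rule dnth[OF dist]) (use that in auto)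
      show ?thesis using a b h0 lL by auto
    qed
  qed auto
qed

lemma other_nb:
  assumes s: "simple_graph V E" and d: "deg E x = 2" and y: "y \<in> nb E x"
  obtains z where "z \<in> nb E x" "z \<noteq> y"
proof -
  have "nb E x \<noteq> {y}" using d by (auto simp: deg_nb)
  thus ?thesis using y that by blast
qed

lemma path3:
  assumes s: "simple_graph V E" and a: "a \<in> nb E x" and c: "c \<in> nb E x" and ac: "a \<noteq> c"
  shows "is_path V E [a, x, c]"
proof -
  have ax: "a \<noteq> x" "c \<noteq> x" using a c nb_irr[OF s] by auto
  have V: "a \<in> V" "c \<in> V" "x \<in> V" using a c nb_sub[OF s] sg_adj[OF s] by (auto simp: nb_def)
  have e: "{a, x} \<in> E" "{x, c} \<in> E" using a c by (auto simp: nb_def insert_commute)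
  have "{[a, x, c] ! i, [a, x, c] ! (i + 1)} \<in> E" if "i + 1 < length [a, x, c]" for i
  proof -
    have "i = 0 \<or> i = 1" using that by auto
    thus ?thesis using e by auto
  qed
  thus ?thesis unfolding is_path_def using ax ac V by auto
qed

lemma two_leaves:
  assumes t: "is_tree V E" and w: "w \<in> V" "deg E w > 2" and dx: "deg E x = 2"
    and a: "a \<in> nb E x" and c: "c \<in> nb E x" and ac: "a \<noteq> c" and da: "deg E a = 1" and dc: "deg E c = 1"
  shows False
proof -
  have s: "simple_graph V E" using t by (simp add: is_tree_def)
  have nx: "nb E x = {a, c}"
    using deg_eq_nb[OF s, of x "{a,c}"] dx a c ac by auto
  have na: "nb E a = {x}" using leaf_nb[OF s da, of x] a by (simp add: nb_def)
  have nc: "nb E c = {x}" using leaf_nb[OF s dc, of x] c by (simp add: nb_def)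
  have xV: "x \<in> V" using a sg_adj[OF s] by (auto simp: nb_def)
  have Vs: "{a, x, c} \<subseteq> V" using a c xV nb_sub[OF s] by auto
  have "{a, x, c} = V"
  proof (rule closure_all[OF t Vs])
    show "x \<in> {a, x, c}" by simp
    fix y z assume y: "y \<in> {a, x, c}" and e: "{y, z} \<in> E"
    hence "z \<in> nb E y" by (simp add: nb_def insert_commute)
    thus "z \<in> {a, x, c}" using y na nc nx by auto
  qed
  hence "w \<in> {a, x, c}" using w by simp
  thus False using w dx da dc by auto
qed

lemma PO3:
  assumes t: "is_tree V E" and S: "S \<subseteq> V" and eS: "card (Esub E S) + 1 = card S"
    and x: "x \<notin> S" and a: "a \<in> nb E x" "a \<in> S" and c: "c \<in> nb E x" "c \<in> S" and ac: "a \<noteq> c"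
  shows False
proof -
  have s: "simple_graph V E" using t by (simp add: is_tree_def)
  show False
  proof (rule PO[OF t S eS path3[OF s a(1) c(1) ac]])
    show "\<And>i. 0 < i \<Longrightarrow> i + 1 < length [a, x, c] \<Longrightarrow> [a, x, c] ! i \<notin> S"
    proof -
      fix i assume "0 < i" "i + 1 < length [a, x, c]"
      hence "i = 1" by auto
      thus "[a, x, c] ! i \<notin> S" using x by simp
    qed
  qed (use a c in auto)
qed

lemma end_not2:
  assumes t: "is_tree V E" and p: "is_path V E ps" "inner_deg2 E ps" "length ps \<ge> 4"
    and mx: "\<And>qs. is_path V E qs \<Longrightarrow> inner_deg2 E qs \<Longrightarrow> length qs \<ge> 4 \<Longrightarrow> length qs \<le> length ps"
  shows "deg E (hd ps) \<noteq> 2"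
proof
  assume d: "deg E (hd ps) = 2"
  have s: "simple_graph V E" using t by (simp add: is_tree_def)
  have ne: "ps \<noteq> []" using p by auto
  have h0: "hd ps = ps ! 0" using ne by (simp add: hd_conv_nth)
  have dist: "distinct ps" using p by (simp add: is_path_def)
  have e01: "{ps ! 0, ps ! 1} \<in> E" using path_edge[OF p(1), of 0] p(3) by simp
  hence n1: "ps ! 1 \<in> nb E (hd ps)" using h0 by (simp add: nb_def insert_commute)
  obtain z where z: "z \<in> nb E (hd ps)" "z \<noteq> ps ! 1" using other_nb[OF s d n1] by blast
  have zV: "z \<in> V" using z nb_sub[OF s] by auto
  have zh: "z \<noteq> hd ps" using z nb_irr[OF s] by auto
  have ez: "{z, hd ps} \<in> E" using z by (simp add: nb_def)
  show False
  proof (cases "z \<in> set ps")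
    case False
    have "is_path V E (z # ps)" using path_cons[OF p(1) zV False ez] .
    moreover have "inner_deg2 E (z # ps)" using inner_cons[OF p(2) ne d] .
    moreover have "length (z # ps) \<ge> 4" using p by simp
    ultimately have "length (z # ps) \<le> length ps" using mx by blast
    thus False by simp
  next
    case True
    then obtain j where j: "j < length ps" "z = ps ! j" by (auto simp: in_set_conv_nth)
    have j2: "j \<ge> 2" using j zh z(2) h0 by (cases j; cases "j - 1"; auto)
    let ?q = "take (j + 1) ps"
    have pq: "is_path V E ?q" by (rule path_take[OF p(1)]) (use j j2 in auto)
    have lq: "length ?q \<ge> 3" using j j2 by simp
    have hq: "hd ?q = ps ! 0" using j h0 by (simp add: hd_conv_nth)
    have lastq: "last ?q = ps ! j"
    proof -
      have "?q \<noteq> []" using ne by simp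
      hence "last ?q = ?q ! (length ?q - 1)" by (rule last_conv_nth)
      thus ?thesis using j by simp
    qed
    have "{hd ?q, last ?q} \<in> E" using ez hq lastq j h0 by (simp add: insert_commute)
    thus False using cycle_free[OF t pq lq] by blast
  qed
qed

lemma long_path:
  assumes t: "is_tree V E" and w: "w \<in> V" "deg E w > 2"
    and uv: "{u, v} \<in> E" and du: "deg E u = 2" and dv: "deg E v = 2"
  shows "\<exists>ps. (internal_path V E ps \<or> pendent_path V E ps) \<and> path_len ps \<ge> 3"
proof -
  have s: "simple_graph V E" using t by (simp add: is_tree_def)
  have fV: "finite V" using sg_fin[OF s] .
  have dpos: "deg E y \<ge> 1" if "y \<in> V" for y
  proof (cases "y = w")
    case True thus ?thesis using w by simp
  next
    case False thus ?thesis using deg_pos[OF t that w(1)] by simp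
  qed
  have vu: "v \<in> nb E u" and uv': "u \<in> nb E v" using uv by (auto simp: nb_def insert_commute)
  obtain x where x: "x \<in> nb E u" "x \<noteq> v" using other_nb[OF s du vu] by blast
  obtain y where y: "y \<in> nb E v" "y \<noteq> u" using other_nb[OF s dv uv'] by blast
  have xy: "x \<noteq> y"
  proof
    assume xy: "x = y"
    have "is_path V E [u, v, x]" using path3[OF s uv' _ ] y xy by (metis nb_irr[OF s] x(1))
    moreover have "{hd [u, v, x], last [u, v, x]} \<in> E" using x by (simp add: nb_def insert_commute)
    ultimately show False using cycle_free[OF t] by fastforce
  qed
  define Q where "Q = {qs. is_path V E qs \<and> inner_deg2 E qs \<and> length qs \<ge> 4}"
  have p0: "[x, u, v, y] \<in> Q"
  proof -
    have ne: "x \<noteq> u" "v \<noteq> y" "u \<noteq> v" using x y nb_irr[OF s] sg_adj[OF s uv] by auto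
    have V: "x \<in> V" "u \<in> V" "v \<in> V" "y \<in> V" using x y vu uv' nb_sub[OF s] by auto
    have e: "{x, u} \<in> E" "{u, v} \<in> E" "{v, y} \<in> E" using x y uv by (auto simp: nb_def insert_commute)
    have "{[x, u, v, y] ! i, [x, u, v, y] ! (i + 1)} \<in> E" if "i + 1 < length [x, u, v, y]" for i
    proof -
      have "i = 0 \<or> i = 1 \<or> i = 2" using that by auto
      thus ?thesis using e by auto
    qed
    hence "is_path V E [x, u, v, y]" unfolding is_path_def using ne x y xy V by auto
    moreover have "inner_deg2 E [x, u, v, y]"
      unfolding inner_deg2_def
    proof (intro allI impI)
      fix i assume "0 < i \<and> i + 1 < length [x, u, v, y]"
      hence "i = 1 \<or> i = 2" by auto
      thus "deg E ([x, u, v, y] ! i) = 2" using du dv by auto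
    qed
    ultimately show ?thesis by (simp add: Q_def)
  qed
  have fQ: "finite Q"
    by (rule finite_subset[OF _ finite_subset_distinct[OF fV]]) (auto simp: Q_def is_path_def)
  define M where "M = Max (length ` Q)"
  obtain ps where ps: "ps \<in> Q" "length ps = M"
    using Max_in[of "length ` Q"] fQ p0 unfolding M_def by fastforce
  have mx: "length qs \<le> length ps" if "is_path V E qs" "inner_deg2 E qs" "length qs \<ge> 4" for qs
  proof -
    have "qs \<in> Q" using that by (simp add: Q_def)
    thus ?thesis using Max_ge[of "length ` Q" "length qs"] fQ ps unfolding M_def by simp
  qed
  have p: "is_path V E ps" "inner_deg2 E ps" "length ps \<ge> 4" using ps by (auto simp: Q_def)
  have prv: "is_path V E (rev ps)" "inner_deg2 E (rev ps)" "length (rev ps) \<ge> 4"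
    using path_rev[OF p(1)] inner_rev[OF p(2)] p(3) by auto
  have dh: "deg E (hd ps) \<noteq> 2" using end_not2[OF t p mx] by blast
  have dl: "deg E (last ps) \<noteq> 2"
    using end_not2[OF t prv] mx by (simp add: hd_rev)
  have ne: "ps \<noteq> []" using p by auto
  have hV: "hd ps \<in> V" "last ps \<in> V" using p ne by (auto simp: is_path_def)
  have h1: "deg E (hd ps) = 1 \<or> deg E (hd ps) > 2" using dh dpos[OF hV(1)] by linarith
  have l1: "deg E (last ps) = 1 \<or> deg E (last ps) > 2" using dl dpos[OF hV(2)] by linarith
  have pl: "path_len ps \<ge> 3" "path_len (rev ps) \<ge> 3" using p by (auto simp: path_len_def)
  show ?thesis
  proof (cases "deg E (hd ps) > 2")
    case True
    show ?thesis
    proof (cases "deg E (last ps) > 2")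
      case True
      hence "internal_path V E ps" using \<open>deg E (hd ps) > 2\<close> p by (simp add: internal_path_def)
      thus ?thesis using pl by blast
    next
      case False
      hence "deg E (last ps) = 1" using l1 by simp
      hence "pendent_path V E (rev ps)" using \<open>deg E (hd ps) > 2\<close> prv
        by (simp add: pendent_path_def hd_rev last_rev)
      thus ?thesis using pl by blast
    qed
  next
    case False
    hence hd1: "deg E (hd ps) = 1" using h1 by simp
    show ?thesis
    proof (cases "deg E (last ps) > 2")
      case True
      hence "pendent_path V E ps" using hd1 p by (simp add: pendent_path_def)
      thus ?thesis using pl by blast
    next
      case False
      hence la1: "deg E (last ps) = 1" using l1 by simp
      let ?L = "length ps"
      have dist: "distinct ps" using p by (simp add: is_path_def)
      have h0: "hd ps = ps ! 0" and lL: "last ps = ps ! (?L - 1)" using ne by (auto simp: hd_conv_nth last_conv_nth)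
      have sV: "set ps \<subseteq> V" using p by (simp add: is_path_def)
      have degs: "deg E (ps ! i) \<le> 2" if "i < ?L" for i
      proof -
        have "i = 0 \<or> i = ?L - 1 \<or> (0 < i \<and> i + 1 < ?L)" using that by auto
        thus ?thesis using hd1 la1 h0 lL p(2) by (auto simp: inner_deg2_def)
      qed
      have "set ps = V"
      proof (rule closure_all[OF t sV])
        show "hd ps \<in> set ps" using ne by simp
        fix a z assume a: "a \<in> set ps" and e: "{a, z} \<in> E"
        have za: "z \<in> nb E a" using e by (simp add: nb_def insert_commute)
        obtain i where i: "i < ?L" "a = ps ! i" using a by (auto simp: in_set_conv_nth)
        consider "i = 0" | "i = ?L - 1" | "0 < i \<and> i + 1 < ?L" using i by linarith
        thus "z \<in> set ps"
        proof cases
          case 1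
          have "{ps ! 0, ps ! 1} \<in> E" using path_edge[OF p(1), of 0] p(3) by simp
          hence "nb E (ps ! 0) = {ps ! 1}" using leaf_nb[OF s, of "ps ! 0" "ps ! 1"] hd1 h0 by simp
          thus ?thesis using za i 1 p(3) by auto
        next
          case 2
          have "{ps ! (?L - 2), ps ! (?L - 2 + 1)} \<in> E" using path_edge[OF p(1), of "?L - 2"] p(3) by simp
          moreover have "?L - 2 + 1 = ?L - 1" using p(3) by simp
          ultimately have "{ps ! (?L - 1), ps ! (?L - 2)} \<in> E" by (simp add: insert_commute)
          hence "nb E (ps ! (?L - 1)) = {ps ! (?L - 2)}" using leaf_nb[OF s, of "ps ! (?L - 1)" "ps ! (?L - 2)"] la1 lL by simp
          thus ?thesis using za i 2 p(3) by auto
        next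
          case 3
          have d2: "deg E (ps ! i) = 2" using 3 p(2) by (simp add: inner_deg2_def)
          have e1: "{ps ! (i - 1), ps ! (i - 1 + 1)} \<in> E" using path_edge[OF p(1), of "i - 1"] 3 by simp
          have e2: "{ps ! i, ps ! (i + 1)} \<in> E" using path_edge[OF p(1), of i] 3 by simp
          have A: "{ps ! (i - 1), ps ! (i + 1)} \<subseteq> nb E (ps ! i)"
            using e1 e2 3 by (auto simp: nb_def insert_commute)
          have neq: "ps ! (i - 1) \<noteq> ps ! (i + 1)" by (rule dnth[OF dist]) (use 3 in auto)
          have "nb E (ps ! i) = {ps ! (i - 1), ps ! (i + 1)}"
            using deg_eq_nb[OF s _ A] d2 neq by simp
          moreover have "ps ! (i - 1) \<in> set ps" "ps ! (i + 1) \<in> set ps" using 3 by auto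
          ultimately show ?thesis using za i by auto
        qed
      qed
      hence "w \<in> set ps" using w by simp
      then obtain i where "i < ?L" "w = ps ! i" by (auto simp: in_set_conv_nth)
      thus ?thesis using degs w by fastforce
    qed
  qed
qed

definition Fk :: "'a set \<Rightarrow> 'a set set \<Rightarrow> nat \<Rightarrow> 'a set" where
  "Fk V E k = {v\<in>V. deg E v = k}"

definition Pc :: "'a set \<Rightarrow> 'a set set \<Rightarrow> nat \<Rightarrow> nat \<Rightarrow> nat" where
  "Pc V E i j = (\<Sum>v\<in>Fk V E i. card {u\<in>nb E v. deg E u = j})"

definition good :: "'a set \<Rightarrow> 'a set set \<Rightarrow> bool" where
  "good V E \<longleftrightarrow> is_tree V E \<and> (\<forall>v\<in>V. deg E v \<le> 4) \<and> (\<exists>w\<in>V. deg E w > 2)"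

lemma good_sg: "good V E \<Longrightarrow> simple_graph V E"
  by (simp add: good_def is_tree_def)

lemma good_range: "good V E \<Longrightarrow> v \<in> V \<Longrightarrow> deg E v \<in> {1,2,3,4}"
proof -
  assume g: "good V E" and v: "v \<in> V"
  obtain w where w: "w \<in> V" "deg E w > 2" using g by (auto simp: good_def)
  have "deg E v \<ge> 1"
  proof (cases "v = w")
    case True thus ?thesis using w by simp
  next
    case False thus ?thesis using deg_pos[of V E v w] g v w by (simp add: good_def)
  qed
  moreover have "deg E v \<le> 4" using g v by (simp add: good_def)
  ultimately show ?thesis by auto
qed

lemma split_sum:
  fixes f :: "'a \<Rightarrow> 'b::comm_monoid_add"
  assumes "finite A" "\<And>x. x \<in> A \<Longrightarrow> deg E x \<in> {1,2,3,4}"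
  shows "(\<Sum>x\<in>A. f x) = (\<Sum>k\<in>{1,2,3,4::nat}. \<Sum>x\<in>{x\<in>A. deg E x = k}. f x)"
  by (rule sum.group[symmetric]) (use assms in auto)

lemma deg_row:
  assumes g: "good V E" and v: "v \<in> V"
  shows "deg E v = (\<Sum>j\<in>{1,2,3,4::nat}. card {u\<in>nb E v. deg E u = j})"
proof -
  have s: "simple_graph V E" using good_sg[OF g] .
  have fn: "finite (nb E v)" using nb_fin[OF s] .
  have "deg E v = (\<Sum>x\<in>nb E v. (1::nat))" by (simp add: deg_nb)
  also have "\<dots> = (\<Sum>j\<in>{1,2,3,4::nat}. \<Sum>x\<in>{u\<in>nb E v. deg E u = j}. (1::nat))"
    by (rule split_sum[OF fn]) (use good_range[OF g] nb_sub[OF s] in blast)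
  finally show ?thesis by simp
qed

lemma fin_Fk: assumes g: "good V E" shows "finite (Fk V E k)"
proof -
  have "finite V" using sg_fin[OF good_sg[OF g]] .
  thus ?thesis by (simp add: Fk_def)
qed

lemma good_range2: "good V E \<Longrightarrow> v \<in> V \<Longrightarrow> 2 < deg E v \<Longrightarrow> deg E v = 3 \<or> deg E v = 4"
  using good_range[of V E v] by auto

lemma Pc_row:
  assumes g: "good V E"
  shows "k * card (Fk V E k) = (\<Sum>j\<in>{1,2,3,4::nat}. Pc V E k j)"
proof -
  have "k * card (Fk V E k) = (\<Sum>v\<in>Fk V E k. deg E v)" by (simp add: Fk_def)
  also have "\<dots> = (\<Sum>v\<in>Fk V E k. \<Sum>j\<in>{1,2,3,4::nat}. card {u\<in>nb E v. deg E u = j})"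
    by (rule sum.cong) (use deg_row[OF g] in \<open>auto simp: Fk_def\<close>)
  also have "\<dots> = (\<Sum>j\<in>{1,2,3,4::nat}. Pc V E k j)"
    unfolding Pc_def by (rule sum.swap)
  finally show ?thesis .
qed

lemma Pc_sym:
  assumes g: "good V E"
  shows "Pc V E i j = Pc V E j i"
proof -
  have s: "simple_graph V E" using good_sg[OF g] .
  have fi: "finite (Fk V E i)" "finite (Fk V E j)" using fin_Fk[OF g] by auto
  have eq: "{u\<in>nb E v. deg E u = k} = {u\<in>Fk V E k. v \<in> nb E u}" for v k
    using nb_sub[OF s] by (auto simp: Fk_def nb_sym)
  have "Pc V E i j = (\<Sum>v\<in>Fk V E i. \<Sum>u\<in>Fk V E j. if v \<in> nb E u then 1 else 0)"
    unfolding Pc_def eq by (simp add: sum.inter_filter[symmetric] fi)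
  also have "\<dots> = (\<Sum>u\<in>Fk V E j. \<Sum>v\<in>Fk V E i. if v \<in> nb E u then 1 else 0)"
    by (rule sum.swap)
  also have "\<dots> = (\<Sum>u\<in>Fk V E j. \<Sum>v\<in>Fk V E i. if u \<in> nb E v then 1 else 0)"
    by (simp add: nb_sym)
  also have "\<dots> = Pc V E j i"
    unfolding Pc_def eq by (simp add: sum.inter_filter[symmetric] fi)
  finally show ?thesis .
qed

lemma sum_V_split:
  fixes f :: "'a \<Rightarrow> 'b::comm_monoid_add"
  assumes g: "good V E"
  shows "(\<Sum>v\<in>V. f v) = (\<Sum>k\<in>{1,2,3,4::nat}. \<Sum>v\<in>Fk V E k. f v)"
  unfolding Fk_def by (rule split_sum) (use sg_fin[OF good_sg[OF g]] good_range[OF g] in auto)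

lemma M2_P:
  assumes g: "good V E"
  shows "2 * M2 E = (\<Sum>i\<in>{1,2,3,4::nat}. \<Sum>j\<in>{1,2,3,4::nat}. i * j * Pc V E i j)"
proof -
  have s: "simple_graph V E" using good_sg[OF g] .
  have "2 * M2 E = (\<Sum>e\<in>E. \<Sum>v\<in>e. \<Prod>w\<in>e. deg E w)"
  proof -
    have ee: "(\<Sum>v\<in>e. \<Prod>w\<in>e. deg E w) = 2 * (\<Prod>w\<in>e. deg E w)" if eE: "e \<in> E" for e
    proof -
      obtain a b where "e = {a,b}" "a \<noteq> b" using sg_edge[OF s eE] by blast
      thus ?thesis by simp
    qed
    have "2 * M2 E = (\<Sum>e\<in>E. 2 * (\<Prod>w\<in>e. deg E w))" unfolding M2_def by (simp add: sum_distrib_left)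
    also have "\<dots> = (\<Sum>e\<in>E. \<Sum>v\<in>e. \<Prod>w\<in>e. deg E w)" by (rule sum.cong[OF refl]) (rule ee[symmetric])
    finally show ?thesis .
  qed
  also have "\<dots> = (\<Sum>v\<in>V. \<Sum>u\<in>nb E v. \<Prod>w\<in>{u,v}. deg E w)"
    by (rule DC[OF s])
  also have "\<dots> = (\<Sum>v\<in>V. \<Sum>u\<in>nb E v. deg E v * deg E u)"
  proof (rule sum.cong[OF refl], rule sum.cong[OF refl])
    fix v u assume "u \<in> nb E v"
    hence "u \<noteq> v" using nb_irr[OF s] by auto
    thus "(\<Prod>w\<in>{u,v}. deg E w) = deg E v * deg E u" by simp
  qed
  also have "\<dots> = (\<Sum>i\<in>{1,2,3,4::nat}. \<Sum>v\<in>Fk V E i. \<Sum>u\<in>nb E v. deg E v * deg E u)"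
    by (rule sum_V_split[OF g])
  also have "\<dots> = (\<Sum>i\<in>{1,2,3,4::nat}. \<Sum>v\<in>Fk V E i. \<Sum>j\<in>{1,2,3,4::nat}. \<Sum>u\<in>{u\<in>nb E v. deg E u = j}. i * j)"
  proof (rule sum.cong[OF refl], rule sum.cong[OF refl])
    fix i v assume v: "v \<in> Fk V E i"
    have "(\<Sum>u\<in>nb E v. deg E v * deg E u) = (\<Sum>j\<in>{1,2,3,4::nat}. \<Sum>u\<in>{u\<in>nb E v. deg E u = j}. deg E v * deg E u)"
      by (rule split_sum[OF nb_fin[OF s]]) (use good_range[OF g] nb_sub[OF s] in blast)
    also have "\<dots> = (\<Sum>j\<in>{1,2,3,4::nat}. \<Sum>u\<in>{u\<in>nb E v. deg E u = j}. i * j)"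
      using v by (auto simp: Fk_def intro!: sum.cong)
    finally show "(\<Sum>u\<in>nb E v. deg E v * deg E u) = (\<Sum>j\<in>{1,2,3,4::nat}. \<Sum>u\<in>{u\<in>nb E v. deg E u = j}. i * j)" .
  qed
  also have "\<dots> = (\<Sum>i\<in>{1,2,3,4::nat}. \<Sum>j\<in>{1,2,3,4::nat}. i * j * Pc V E i j)"
  proof (rule sum.cong[OF refl])
    fix i :: nat
    have "(\<Sum>v\<in>Fk V E i. \<Sum>j\<in>{1,2,3,4::nat}. \<Sum>u\<in>{u\<in>nb E v. deg E u = j}. i * j)
        = (\<Sum>j\<in>{1,2,3,4::nat}. \<Sum>v\<in>Fk V E i. \<Sum>u\<in>{u\<in>nb E v. deg E u = j}. i * j)"
      by (rule sum.swap)
    also have "\<dots> = (\<Sum>j\<in>{1,2,3,4::nat}. i * j * Pc V E i j)"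
      unfolding Pc_def by (simp add: sum_distrib_left mult.commute)
    finally show "(\<Sum>v\<in>Fk V E i. \<Sum>j\<in>{1,2,3,4::nat}. \<Sum>u\<in>{u\<in>nb E v. deg E u = j}. i * j)
        = (\<Sum>j\<in>{1,2,3,4::nat}. i * j * Pc V E i j)" .
  qed
  finally show ?thesis .
qed

lemma Esub_count:
  assumes g: "good V E" and S: "S \<subseteq> V"
  shows "2 * card (Esub E S) = (\<Sum>v\<in>S. card (nb E v \<inter> S))"
proof -
  have s: "simple_graph V E" using good_sg[OF g] .
  have "2 * card (Esub E S) = (\<Sum>v\<in>S. deg (Esub E S) v)"
    using handshake[OF sg_Esub[OF s S]] by simp
  also have "\<dots> = (\<Sum>v\<in>S. card (nb E v \<inter> S))"
    by (rule sum.cong) (auto simp: deg_nb nb_Esub)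
  finally show ?thesis .
qed

lemma eF_count:
  assumes g: "good V E"
  shows "2 * card (Esub E (Fk V E 4)) = Pc V E 4 4"
proof -
  have s: "simple_graph V E" using good_sg[OF g] .
  have "2 * card (Esub E (Fk V E 4)) = (\<Sum>v\<in>Fk V E 4. card (nb E v \<inter> Fk V E 4))"
    by (rule Esub_count[OF g]) (auto simp: Fk_def)
  also have "\<dots> = Pc V E 4 4" unfolding Pc_def
    by (rule sum.cong[OF refl]) (use nb_sub[OF s] in \<open>auto simp: Fk_def intro!: arg_cong[where f=card]\<close>)
  finally show ?thesis .
qed

lemma B_eq: "branching_vertices V E = {v\<in>V. deg E v > 2}"
  by (simp add: branching_vertices_def)

lemma eB_count:
  assumes g: "good V E"
  shows "2 * card (Esub E (branching_vertices V E)) = Pc V E 3 3 + Pc V E 3 4 + Pc V E 4 3 + Pc V E 4 4"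
proof -
  let ?B = "branching_vertices V E"
  have s: "simple_graph V E" using good_sg[OF g] .
  have BV: "?B \<subseteq> V" by (auto simp: branching_vertices_def)
  have Bsplit: "?B = Fk V E 3 \<union> Fk V E 4" by (auto simp: branching_vertices_def Fk_def dest: good_range2[OF g])
  have disj: "Fk V E 3 \<inter> Fk V E 4 = {}" by (auto simp: Fk_def)
  have nbB: "nb E v \<inter> ?B = {u\<in>nb E v. deg E u = 3} \<union> {u\<in>nb E v. deg E u = 4}" for v
    using Bsplit nb_sub[OF s] by (auto simp: Fk_def)
  have cnb: "card (nb E v \<inter> ?B) = card {u\<in>nb E v. deg E u = 3} + card {u\<in>nb E v. deg E u = 4}" for v
    unfolding nbB by (rule card_Un_disjoint) (use nb_fin[OF s] in auto)
  have "2 * card (Esub E ?B) = (\<Sum>v\<in>?B. card (nb E v \<inter> ?B))" by (rule Esub_count[OF g BV])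
  also have "\<dots> = (\<Sum>v\<in>Fk V E 3. card (nb E v \<inter> ?B)) + (\<Sum>v\<in>Fk V E 4. card (nb E v \<inter> ?B))"
    unfolding Bsplit by (rule sum.union_disjoint) (use fin_Fk[OF g] disj in auto)
  also have "\<dots> = Pc V E 3 3 + Pc V E 3 4 + Pc V E 4 3 + Pc V E 4 4"
    unfolding cnb Pc_def by (simp add: sum.distrib)
  finally show ?thesis .
qed

lemma Pc_pos_edge:
  assumes "Pc V E i j > 0"
  shows "\<exists>v u. v \<in> V \<and> deg E v = i \<and> deg E u = j \<and> u \<in> nb E v"
proof -
  have "\<not> (\<forall>v\<in>Fk V E i. card {u\<in>nb E v. deg E u = j} = 0)"
  proof
    assume "\<forall>v\<in>Fk V E i. card {u\<in>nb E v. deg E u = j} = 0"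
    hence "Pc V E i j = 0" unfolding Pc_def by simp
    thus False using assms by simp
  qed
  then obtain v where v: "v \<in> Fk V E i" "card {u\<in>nb E v. deg E u = j} \<noteq> 0" by blast
  hence "{u\<in>nb E v. deg E u = j} \<noteq> {}" by force
  then obtain u where "u \<in> nb E v" "deg E u = j" by blast
  thus ?thesis using v by (auto simp: Fk_def)
qed

lemma edge_Pc_pos:
  assumes g: "good V E" and v: "v \<in> V" "deg E v = i" and u: "u \<in> nb E v" "deg E u = j"
  shows "Pc V E i j > 0"
proof -
  have s: "simple_graph V E" using good_sg[OF g] .
  have "card {u\<in>nb E v. deg E u = j} > 0"
    using u nb_fin[OF s, of v] by (auto simp: card_gt_0_iff)
  moreover have "v \<in> Fk V E i" using v by (simp add: Fk_def)
  ultimately show ?thesis unfolding Pc_def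
    using fin_Fk[OF g] by (metis (no_types, lifting) gr0I member_le_sum not_le zero_le)
qed

lemma Pc_bound1:
  assumes "\<And>v. v \<in> Fk V E i \<Longrightarrow> card {u\<in>nb E v. deg E u = j} \<le> 1"
  shows "Pc V E i j \<le> card (Fk V E i)"
  unfolding Pc_def using sum_mono[of "Fk V E i" "\<lambda>v. card {u\<in>nb E v. deg E u = j}" "\<lambda>_. 1"] assms by simp

lemma no11:
  assumes g: "good V E" shows "Pc V E 1 1 = 0"
proof (rule ccontr)
  assume "Pc V E 1 1 \<noteq> 0"
  then obtain v u where vu: "v \<in> V" "deg E v = 1" "deg E u = 1" "u \<in> nb E v"
    using Pc_pos_edge[of V E 1 1] by blast
  have s: "simple_graph V E" using good_sg[OF g] .
  have t: "is_tree V E" using g by (simp add: good_def)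
  have e: "{v, u} \<in> E" using vu by (simp add: nb_def insert_commute)
  have uV: "u \<in> V" using vu nb_sub[OF s] by auto
  have nv: "nb E v = {u}" using leaf_nb[OF s vu(2) e] .
  have nu: "nb E u = {v}" using leaf_nb[OF s vu(3)] e by (simp add: insert_commute)
  have "{v, u} = V"
  proof (rule closure_all[OF t])
    show "{v, u} \<subseteq> V" using vu uV by auto
    fix y z assume "y \<in> {v, u}" "{y, z} \<in> E"
    moreover hence "z \<in> nb E y" by (simp add: nb_def insert_commute)
    ultimately show "z \<in> {v, u}" using nv nu by auto
  next
    show "v \<in> {v, u}" by simp
  qed
  moreover obtain w where "w \<in> V" "deg E w > 2" using g by (auto simp: good_def)
  ultimately show False using vu by auto
qed

lemma handshake_good:
  assumes g: "good V E"
  shows "(\<Sum>k\<in>{1,2,3,4::nat}. k * card (Fk V E k)) = 2 * card E"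
proof -
  have "(\<Sum>k\<in>{1,2,3,4::nat}. k * card (Fk V E k)) = (\<Sum>k\<in>{1,2,3,4::nat}. \<Sum>v\<in>Fk V E k. deg E v)"
    by (rule sum.cong) (auto simp: Fk_def)
  also have "\<dots> = (\<Sum>v\<in>V. deg E v)" by (rule sum_V_split[OF g, symmetric])
  also have "\<dots> = 2 * card E" by (rule handshake[OF good_sg[OF g]])
  finally show ?thesis .
qed

lemma card_split:
  assumes g: "good V E"
  shows "card V = card (Fk V E 1) + card (Fk V E 2) + card (Fk V E 3) + card (Fk V E 4)"
proof -
  have "card V = (\<Sum>v\<in>V. (1::nat))" by simp
  also have "\<dots> = (\<Sum>k\<in>{1,2,3,4::nat}. \<Sum>v\<in>Fk V E k. (1::nat))" by (rule sum_V_split[OF g])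
  finally show ?thesis by simp
qed

lemma card_B:
  assumes g: "good V E"
  shows "card (branching_vertices V E) = card (Fk V E 3) + card (Fk V E 4)"
proof -
  have "branching_vertices V E = Fk V E 3 \<union> Fk V E 4" by (auto simp: branching_vertices_def Fk_def dest: good_range2[OF g])
  thus ?thesis using fin_Fk[OF g] by (simp add: card_Un_disjoint Fk_def disjoint_iff)
qed

locale LPf =
  fixes n b n1 n2 n3 n4 p12 p13 p14 p22 p23 p24 p33 p34 p44 M eB eF :: int
  assumes hn: "n = n1 + n2 + n3 + n4" and hb: "b = n3 + n4"
    and r1: "n1 = p12 + p13 + p14"
    and r2: "2 * n2 = p12 + p22 + p23 + p24"
    and r3: "3 * n3 = p13 + p23 + p33 + p34"
    and r4: "4 * n4 = p14 + p24 + p34 + p44"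
    and hs: "n1 + 2 * n2 + 3 * n3 + 4 * n4 = 2 * n - 2"
    and hM: "2 * M = 4 * p12 + 6 * p13 + 8 * p14 + 4 * p22 + 12 * p23 + 16 * p24 + 9 * p33 + 24 * p34 + 16 * p44"
    and heF: "2 * eF = p44" and heB: "2 * eB = p33 + 2 * p34 + p44"
    and fB: "eB + 1 \<le> b" and fF: "n4 \<ge> 1 \<Longrightarrow> eF + 1 \<le> n4"
    and nn: "n1 \<ge> 0" "n2 \<ge> 0" "n3 \<ge> 0" "n4 \<ge> 0" "p12 \<ge> 0" "p13 \<ge> 0" "p14 \<ge> 0" "p22 \<ge> 0"
      "p23 \<ge> 0" "p24 \<ge> 0" "p33 \<ge> 0" "p34 \<ge> 0" "p44 \<ge> 0" "eF \<ge> 0" "eB \<ge> 0"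
    and bn: "2 * b < n - 2"
begin

lemma n1e: "n1 = n3 + 2 * n4 + 2" using hn hs by linarith

lemma id1: "8 * n + 32 * b - 24 - 2 * M = 6 * p13 + 4 * p14 + 4 * p23 + 8 * p34 + 7 * p33 + 8 * b - 8 - 8 * eB + 4 * n3"
proof -
  have "2 * M + 6 * p13 + 4 * p14 + 4 * p23 + 8 * p34 + 7 * p33 = 8 * n2 + 36 * n3 + 48 * n4 + 8 * eB"
    using r2 r3 r4 hM heB by linarith
  thus ?thesis using n1e hn hb by linarith
qed

lemma id2: "12 * n + 12 * b - 40 - 2 * M = 2 * p23 + 6 * p34 + 2 * p22 + 5 * p33 + 12 * b - 12 - 12 * eB + 2 * n3"
proof -
  have "2 * M + 2 * p23 + 6 * p34 + 2 * p22 + 5 * p33 = -2 * n1 + 12 * n2 + 24 * n3 + 40 * n4 + 12 * eB"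
    using r1 r2 r3 r4 hM heB by linarith
  thus ?thesis using n1e hn hb by linarith
qed

lemma id3: "20 * n - 12 * b - 56 - 2 * M = 2 * p23 + 2 * p22 + 2 * p33 + 6 * b - 6 - 6 * eB + 6 * n4 - 6 - 6 * eF + 8 * n2"
proof -
  have "2 * M + 2 * p23 + 2 * p22 + 2 * p33 = -2 * n1 + 12 * n2 + 24 * n3 + 40 * n4 + 6 * eB + 6 * eF"
    using r1 r2 r3 r4 hM heB heF by linarith
  thus ?thesis using n1e hn hb by linarith
qed

lemma id4: "32 * n - 40 * b - 72 - 2 * M = 4 * p14 + 2 * p23 + 4 * p24 + 2 * p22 + 2 * b - 2 - 2 * eB + 2 * n4 - 2 - 2 * eF + 20 * n2"
proof -
  have "2 * M + 4 * p14 + 2 * p23 + 4 * p24 + 2 * p22 = -2 * n1 + 12 * n2 + 24 * n3 + 56 * n4 + 2 * eB + 2 * eF"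
    using r1 r2 r3 r4 hM heB heF by linarith
  thus ?thesis using n1e hn hb by linarith
qed

lemma n4z: "n4 = 0 \<Longrightarrow> eF = 0 \<and> n2 \<ge> 1"
proof -
  assume z: "n4 = 0"
  hence "p44 = 0" using r4 nn by linarith
  hence "eF = 0" using heF by linarith
  moreover have "n2 \<ge> 1" using z n1e hn hb bn by linarith
  ultimately show ?thesis by simp
qed

lemma eF_le: "eF \<le> n4" using fF n4z nn by (cases "n4 \<ge> 1") auto

lemma B1: "M \<le> 4 * n + 16 * b - 12" using id1 nn fB by linarith
lemma B2: "M \<le> 6 * n + 6 * b - 20" using id2 nn fB by linarith
lemma B3: "M \<le> 10 * n - 6 * b - 28"
proof (cases "n4 \<ge> 1")
  case True thus ?thesis using id3 nn fB fF by linarith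
next
  case False thus ?thesis using id3 nn fB n4z by linarith
qed
lemma B4: "M \<le> 16 * n - 20 * b - 36"
proof (cases "n4 \<ge> 1")
  case True thus ?thesis using id4 nn fB fF by linarith
next
  case False thus ?thesis using id4 nn fB n4z by linarith
qed

lemma E1: "M = 4 * n + 16 * b - 12 \<Longrightarrow> n3 = 0 \<and> p14 = 0 \<and> eB + 1 = b"
  using id1 nn fB by linarith
lemma E1r: "n3 = 0 \<Longrightarrow> p14 = 0 \<Longrightarrow> eB + 1 = b \<Longrightarrow> M = 4 * n + 16 * b - 12"
proof -
  assume a: "n3 = 0" "p14 = 0" "eB + 1 = b"
  hence "p13 = 0" "p23 = 0" "p33 = 0" "p34 = 0" using r3 nn by linarith+
  thus ?thesis using id1 a by linarith
qed

lemma E2: "M = 6 * n + 6 * b - 20 \<Longrightarrow> n3 = 0 \<and> p22 = 0 \<and> eB + 1 = b"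
  using id2 nn fB by linarith
lemma E2r: "n3 = 0 \<Longrightarrow> p22 = 0 \<Longrightarrow> eB + 1 = b \<Longrightarrow> M = 6 * n + 6 * b - 20"
proof -
  assume a: "n3 = 0" "p22 = 0" "eB + 1 = b"
  hence "p13 = 0" "p23 = 0" "p33 = 0" "p34 = 0" using r3 nn by linarith+
  thus ?thesis using id2 a by linarith
qed

lemma E3: "M = 10 * n - 6 * b - 28 \<Longrightarrow> n2 = 0 \<and> p33 = 0 \<and> eB + 1 = b \<and> eF + 1 = n4 \<and> n4 \<ge> 1"
proof (cases "n4 \<ge> 1")
  case True thus "M = 10 * n - 6 * b - 28 \<Longrightarrow> ?thesis" using id3 nn fB fF by linarith
next
  case False thus "M = 10 * n - 6 * b - 28 \<Longrightarrow> ?thesis" using id3 nn fB n4z by linarith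
qed
lemma E3r: "n2 = 0 \<Longrightarrow> p33 = 0 \<Longrightarrow> eB + 1 = b \<Longrightarrow> eF + 1 = n4 \<Longrightarrow> M = 10 * n - 6 * b - 28"
proof -
  assume a: "n2 = 0" "p33 = 0" "eB + 1 = b" "eF + 1 = n4"
  hence "p22 = 0" "p23 = 0" using r2 nn by linarith+
  thus ?thesis using id3 a by linarith
qed

lemma E4: "M = 16 * n - 20 * b - 36 \<Longrightarrow> n2 = 0 \<and> p14 = 0 \<and> eB + 1 = b \<and> eF + 1 = n4 \<and> n4 \<ge> 1"
proof (cases "n4 \<ge> 1")
  case True thus "M = 16 * n - 20 * b - 36 \<Longrightarrow> ?thesis" using id4 nn fB fF by linarith
next
  case False thus "M = 16 * n - 20 * b - 36 \<Longrightarrow> ?thesis" using id4 nn fB n4z by linarith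
qed
lemma E4r: "n2 = 0 \<Longrightarrow> p14 = 0 \<Longrightarrow> eB + 1 = b \<Longrightarrow> eF + 1 = n4 \<Longrightarrow> M = 16 * n - 20 * b - 36"
proof -
  assume a: "n2 = 0" "p14 = 0" "eB + 1 = b" "eF + 1 = n4"
  hence "p22 = 0" "p23 = 0" "p24 = 0" using r2 nn by linarith+
  thus ?thesis using id4 a by linarith
qed

lemma C1: "5 * b \<le> n - 4 \<Longrightarrow> n3 = 0 \<Longrightarrow> p22 = 0 \<Longrightarrow> p12 \<le> n2 \<Longrightarrow> p24 \<le> n2 \<Longrightarrow> p14 = 0"
  using r1 r2 r3 n1e hn hb nn by linarith

lemma C2: "5 * b > n - 4 \<Longrightarrow> n3 = 0 \<Longrightarrow> n4 = b \<Longrightarrow> p14 = 0 \<Longrightarrow> p12 \<le> n2 \<Longrightarrow> False"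
  using r1 r3 n1e hn hb nn by linarith

lemma BT2eB: "n2 = 0 \<Longrightarrow> eB + 1 = b"
proof -
  assume "n2 = 0"
  hence "p12 = 0" "p22 = 0" "p23 = 0" "p24 = 0" using r2 nn by linarith+
  thus ?thesis using r1 r3 r4 heB n1e hb by linarith
qed

lemma C3: "7 * b < 3 * n - 4 \<Longrightarrow> n2 = 0 \<Longrightarrow> eF + 1 = n4 \<Longrightarrow> p14 = 0 \<Longrightarrow> p34 \<le> n3 \<Longrightarrow> False"
proof -
  assume a: "7 * b < 3 * n - 4" "n2 = 0" "eF + 1 = n4" "p14 = 0" "p34 \<le> n3"
  hence "p24 = 0" using r2 nn by linarith
  thus False using a r4 heF n1e hn hb by linarith
qed

lemma C4: "7 * b \<ge> 3 * n - 4 \<Longrightarrow> n2 = 0 \<Longrightarrow> eF + 1 = n4 \<Longrightarrow> p33 = 0 \<Longrightarrow> p14 > 0 \<Longrightarrow> False"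
proof -
  assume a: "7 * b \<ge> 3 * n - 4" "n2 = 0" "eF + 1 = n4" "p33 = 0" "p14 > 0"
  hence "p12 = 0" "p23 = 0" "p24 = 0" using r2 nn by linarith+
  thus False using a r1 r3 r4 heF n1e hn hb by linarith
qed

end

lemma rc1: "real b \<le> (real n - 4) / 5 \<longleftrightarrow> 5 * int b \<le> int n - 4"
proof -
  have "real b \<le> (real n - 4) / 5 \<longleftrightarrow> real_of_int (5 * int b) \<le> real_of_int (int n - 4)" by (simp add: field_simps)
  thus ?thesis by (simp only: of_int_le_iff)
qed

lemma rc2: "real b < (real n - 2) / 3 \<longleftrightarrow> 3 * int b < int n - 2"
proof -
  have "real b < (real n - 2) / 3 \<longleftrightarrow> real_of_int (3 * int b) < real_of_int (int n - 2)" by (simp add: field_simps)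
  thus ?thesis by (simp only: of_int_less_iff)
qed

lemma rc3: "real b < (3 * real n - 4) / 7 \<longleftrightarrow> 7 * int b < 3 * int n - 4"
proof -
  have "real b < (3 * real n - 4) / 7 \<longleftrightarrow> real_of_int (7 * int b) < real_of_int (3 * int n - 4)" by (simp add: field_simps)
  thus ?thesis by (simp only: of_int_less_iff)
qed

lemma rc4: "real b < real n / 2 - 1 \<longleftrightarrow> 2 * int b < int n - 2"
proof -
  have "real b < real n / 2 - 1 \<longleftrightarrow> real_of_int (2 * int b) < real_of_int (int n - 2)" by (simp add: field_simps)
  thus ?thesis by (simp only: of_int_less_iff)
qed

lemma nbk: "simple_graph V E \<Longrightarrow> {u\<in>V. {u, v} \<in> E \<and> deg E u = k} = {u\<in>nb E v. deg E u = k}"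
  using nb_sub[of V E v] by (auto simp: nb_def)

lemma P1:
  assumes g: "good V E" and eB: "card (Esub E (branching_vertices V E)) + 1 = card (branching_vertices V E)"
    and ip: "internal_path V E ps"
  shows "path_len ps = 1"
proof (rule ccontr)
  assume ne: "path_len ps \<noteq> 1"
  have t: "is_tree V E" using g by (simp add: good_def)
  have p: "is_path V E ps" using ip by (simp add: internal_path_def)
  have L: "length ps \<ge> 3" using ne p by (auto simp: path_len_def is_path_def)
  have nil: "ps \<noteq> []" using L by auto
  have sp: "set ps \<subseteq> V" using p by (simp add: is_path_def)
  show False
  proof (rule PO[OF t _ eB p L])
    show "branching_vertices V E \<subseteq> V" by (auto simp: branching_vertices_def)
    show "hd ps \<in> branching_vertices V E" using ip sp nil by (auto simp: internal_path_def branching_vertices_def)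
    show "last ps \<in> branching_vertices V E" using ip sp nil by (auto simp: internal_path_def branching_vertices_def)
    fix i assume "0 < i" "i + 1 < length ps"
    thus "ps ! i \<notin> branching_vertices V E" using ip by (auto simp: internal_path_def inner_deg2_def branching_vertices_def)
  qed
qed

lemma P5:
  assumes t: "is_tree V E" and S: "S \<subseteq> V" "S \<noteq> {}" and e: "card (Esub E S) + 1 = card S"
  shows "is_tree S (Esub E S)"
proof -
  have s: "simple_graph V E" using t by (simp add: is_tree_def)
  show ?thesis unfolding is_tree_def
    using sg_Esub[OF s S(1)] S forest(2)[OF t S e] e by simp
qed

lemma P4:
  assumes g: "good V E" and eF: "card (Esub E (Fk V E 4)) + 1 = card (Fk V E 4)"
    and v: "v \<in> V" "deg E v = 3"
  shows "card {u\<in>nb E v. deg E u = 4} \<le> 1"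
proof -
  have s: "simple_graph V E" using good_sg[OF g] .
  have t: "is_tree V E" using g by (simp add: good_def)
  have fin: "finite {u\<in>nb E v. deg E u = 4}" using nb_fin[OF s, of v] by simp
  have "\<forall>a\<in>{u\<in>nb E v. deg E u = 4}. \<forall>c\<in>{u\<in>nb E v. deg E u = 4}. a = c"
  proof (intro ballI, rule ccontr)
    fix a c assume a: "a \<in> {u\<in>nb E v. deg E u = 4}" and c: "c \<in> {u\<in>nb E v. deg E u = 4}" and ac: "a \<noteq> c"
    have aV: "a \<in> V" "c \<in> V" using a c nb_sub[OF s] by auto
    show False
    proof (rule PO3[OF t _ eF _ _ _ _ _ ac])
      show "Fk V E 4 \<subseteq> V" by (auto simp: Fk_def)
      show "v \<notin> Fk V E 4" using v by (simp add: Fk_def)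
    qed (use a c aV in \<open>auto simp: Fk_def\<close>)
  qed
  thus ?thesis using card_le_Suc0_iff_eq[OF fin] by simp
qed

lemma leaf2:
  assumes g: "good V E" and x: "x \<in> Fk V E 2"
  shows "card {u\<in>nb E x. deg E u = 1} \<le> 1"
proof -
  have s: "simple_graph V E" using good_sg[OF g] .
  have t: "is_tree V E" using g by (simp add: good_def)
  obtain w where w: "w \<in> V" "deg E w > 2" using g by (auto simp: good_def)
  have fin: "finite {u\<in>nb E x. deg E u = 1}" using nb_fin[OF s, of x] by simp
  have "\<forall>a\<in>{u\<in>nb E x. deg E u = 1}. \<forall>c\<in>{u\<in>nb E x. deg E u = 1}. a = c"
  proof (intro ballI, rule ccontr)
    fix a c assume a: "a \<in> {u\<in>nb E x. deg E u = 1}" and c: "c \<in> {u\<in>nb E x. deg E u = 1}" and ac: "a \<noteq> c"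
    show False using two_leaves[OF t w, of x a c] a c ac x by (auto simp: Fk_def)
  qed
  thus ?thesis using card_le_Suc0_iff_eq[OF fin] by simp
qed

lemma br2:
  assumes g: "good V E" and c1: "\<forall>ps. internal_path V E ps \<longrightarrow> path_len ps = 1" and x: "x \<in> Fk V E 2"
  shows "card {u\<in>nb E x. deg E u = 4} \<le> 1"
proof -
  have s: "simple_graph V E" using good_sg[OF g] .
  have fin: "finite {u\<in>nb E x. deg E u = 4}" using nb_fin[OF s, of x] by simp
  have "\<forall>a\<in>{u\<in>nb E x. deg E u = 4}. \<forall>c\<in>{u\<in>nb E x. deg E u = 4}. a = c"
  proof (intro ballI, rule ccontr)
    fix a c assume a: "a \<in> {u\<in>nb E x. deg E u = 4}" and c: "c \<in> {u\<in>nb E x. deg E u = 4}" and ac: "a \<noteq> c"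
    have "is_path V E [a, x, c]" using path3[OF s _ _ ac] a c by auto
    moreover have "inner_deg2 E [a, x, c]"
      unfolding inner_deg2_def
    proof (intro allI impI)
      fix i assume "0 < i \<and> i + 1 < length [a, x, c]"
      hence "i = 1" by auto
      thus "deg E ([a, x, c] ! i) = 2" using x by (simp add: Fk_def)
    qed
    ultimately have "internal_path V E [a, x, c]" using a c by (simp add: internal_path_def)
    thus False using c1 by (auto simp: path_len_def)
  qed
  thus ?thesis using card_le_Suc0_iff_eq[OF fin] by simp
qed

lemma pend22:
  assumes g: "good V E" and pp: "pendent_path V E ps" and pl: "path_len ps > 2"
  shows "Pc V E 2 2 > 0"
proof -
  have p: "is_path V E ps" and i2: "inner_deg2 E ps" using pp by (auto simp: pendent_path_def)
  have L: "length ps \<ge> 4" using pl by (simp add: path_len_def)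
  have "1 + 1 < length ps" using L by simp
  hence "{ps ! 1, ps ! (1 + 1)} \<in> E" by (rule path_edge[OF p])
  hence e: "{ps ! 1, ps ! 2} \<in> E" by (simp only: one_add_one)
  have d: "deg E (ps ! 1) = 2" "deg E (ps ! 2) = 2" using i2 L by (auto simp: inner_deg2_def)
  have V: "ps ! 1 \<in> V" using p L by (auto simp: is_path_def)
  show ?thesis
    by (rule edge_Pc_pos[OF g V d(1) _ d(2)]) (use e in \<open>simp add: nb_def insert_commute\<close>)
qed

lemma edge22_path:
  assumes g: "good V E" and P: "Pc V E 2 2 > 0"
  shows "\<exists>ps. (internal_path V E ps \<or> pendent_path V E ps) \<and> path_len ps \<ge> 3"
proof -
  obtain v u where vu: "v \<in> V" "deg E v = 2" "deg E u = 2" "u \<in> nb E v" using Pc_pos_edge[OF P] by blast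
  obtain w where w: "w \<in> V" "deg E w > 2" using g by (auto simp: good_def)
  have t: "is_tree V E" using g by (simp add: good_def)
  have "{u, v} \<in> E" using vu by (simp add: nb_def)
  thus ?thesis using long_path[OF t w] vu by blast
qed

locale TT =
  fixes V :: "'a set" and E :: "'a set set" and n b :: nat
  assumes b1: "1 \<le> b" and bn0: "2 * int b < int n - 2" and ct: "CT_star n b V E"
begin

abbreviation "N k \<equiv> int (card (Fk V E k))"
abbreviation "Q i j \<equiv> int (Pc V E i j)"
abbreviation "eBB \<equiv> int (card (Esub E (branching_vertices V E)))"
abbreviation "eFF \<equiv> int (card (Esub E (Fk V E 4)))"

lemma t: "is_tree V E" using ct by (simp add: CT_star_def chemical_tree_def)
lemma d4: "\<forall>v\<in>V. deg E v \<le> 4" using ct by (simp add: CT_star_def chemical_tree_def)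
lemma cV: "card V = n" using ct by (simp add: CT_star_def)
lemma cB: "card (branching_vertices V E) = b" using ct by (simp add: CT_star_def)
lemma s: "simple_graph V E" using t by (simp add: is_tree_def)
lemma fV: "finite V" using sg_fin[OF s] .
lemma Bne: "branching_vertices V E \<noteq> {}" using cB b1 by auto
lemma BV: "branching_vertices V E \<subseteq> V" by (auto simp: branching_vertices_def)

lemma g: "good V E"
proof -
  obtain w where "w \<in> branching_vertices V E" using Bne by blast
  thus ?thesis using t d4 by (auto simp: good_def branching_vertices_def)
qed

lemma rowk: "k * card (Fk V E k) = Pc V E k 1 + Pc V E k 2 + Pc V E k 3 + Pc V E k 4"
  using Pc_row[OF g, of k] by simp

lemma symk: "Pc V E i j = Pc V E j i" by (rule Pc_sym[OF g])

lemma hs0: "card (Fk V E 1) + 2 * card (Fk V E 2) + 3 * card (Fk V E 3) + 4 * card (Fk V E 4) = 2 * card E"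
  using handshake_good[OF g] by simp

lemma cE: "card E = card V - 1" using t by (simp add: is_tree_def)
lemma Vne: "card V \<ge> 1" using t fV by (simp add: is_tree_def Suc_le_eq card_gt_0_iff)

lemma hM0: "2 * M2 E = (\<Sum>i\<in>{1,2,3,4::nat}. \<Sum>j\<in>{1,2,3,4::nat}. i * j * Pc V E i j)"
  by (rule M2_P[OF g])

sublocale L: LPf "int n" "int b" "N 1" "N 2" "N 3" "N 4" "Q 1 2" "Q 1 3" "Q 1 4" "Q 2 2" "Q 2 3" "Q 2 4"
  "Q 3 3" "Q 3 4" "Q 4 4" "int (M2 E)" eBB eFF
proof unfold_locales
  show "int n = N 1 + N 2 + N 3 + N 4" using card_split[OF g] cV by simp
  show "int b = N 3 + N 4" using card_B[OF g] cB by simp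
  show "N 1 = Q 1 2 + Q 1 3 + Q 1 4" using rowk[of 1] no11[OF g] by simp
  show "2 * N 2 = Q 1 2 + Q 2 2 + Q 2 3 + Q 2 4" using rowk[of 2] symk[of 2 1] by simp
  show "3 * N 3 = Q 1 3 + Q 2 3 + Q 3 3 + Q 3 4" using rowk[of 3] symk[of 3 1] symk[of 3 2] by simp
  show "4 * N 4 = Q 1 4 + Q 2 4 + Q 3 4 + Q 4 4" using rowk[of 4] symk[of 4 1] symk[of 4 2] symk[of 4 3] by simp
  show "N 1 + 2 * N 2 + 3 * N 3 + 4 * N 4 = 2 * int n - 2"
  proof -
    have "int (card (Fk V E 1) + 2 * card (Fk V E 2) + 3 * card (Fk V E 3) + 4 * card (Fk V E 4)) = int (2 * card E)"
      using hs0 by simp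
    thus ?thesis using cE Vne cV by simp
  qed
  show "2 * int (M2 E) = 4 * Q 1 2 + 6 * Q 1 3 + 8 * Q 1 4 + 4 * Q 2 2 + 12 * Q 2 3 + 16 * Q 2 4 + 9 * Q 3 3 + 24 * Q 3 4 + 16 * Q 4 4"
  proof -
    have "2 * M2 E = 4 * Pc V E 1 2 + 6 * Pc V E 1 3 + 8 * Pc V E 1 4 + 4 * Pc V E 2 2 + 12 * Pc V E 2 3 + 16 * Pc V E 2 4 + 9 * Pc V E 3 3 + 24 * Pc V E 3 4 + 16 * Pc V E 4 4"
      using hM0 no11[OF g] symk[of 2 1] symk[of 3 1] symk[of 4 1] symk[of 3 2] symk[of 4 2] symk[of 4 3] by simp
    hence "int (2 * M2 E) = int (4 * Pc V E 1 2 + 6 * Pc V E 1 3 + 8 * Pc V E 1 4 + 4 * Pc V E 2 2 + 12 * Pc V E 2 3 + 16 * Pc V E 2 4 + 9 * Pc V E 3 3 + 24 * Pc V E 3 4 + 16 * Pc V E 4 4)"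
      by (rule arg_cong)
    thus ?thesis by simp
  qed
  show "2 * eFF = Q 4 4" using eF_count[OF g] by simp
  show "2 * eBB = Q 3 3 + 2 * Q 3 4 + Q 4 4" using eB_count[OF g] symk[of 4 3] by simp
  show "eBB + 1 \<le> int b" using forest(1)[OF t BV Bne] cB by simp
  show "eFF + 1 \<le> N 4" if "N 4 \<ge> 1"
  proof -
    have "Fk V E 4 \<noteq> {}" using that by (auto)
    thus ?thesis using forest(1)[OF t _ \<open>Fk V E 4 \<noteq> {}\<close>] by (simp add: Fk_def)
  qed
  show "2 * int b < int n - 2" by (rule bn0)
qed auto

lemma ndeg: "n_deg V E k = card (Fk V E k)" by (simp add: n_deg_def Fk_def)

lemma F3e: "N 3 = 0 \<Longrightarrow> v \<in> V \<Longrightarrow> deg E v \<noteq> 3"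
proof -
  assume "N 3 = 0" "v \<in> V"
  hence "Fk V E 3 = {}" using fin_Fk[OF g, of 3] by simp
  thus "deg E v \<noteq> 3" using \<open>v \<in> V\<close> by (auto simp: Fk_def)
qed

lemma BF4: assumes z: "N 3 = 0" shows "branching_vertices V E = Fk V E 4"
proof
  show "branching_vertices V E \<subseteq> Fk V E 4"
  proof
    fix v assume v: "v \<in> branching_vertices V E"
    hence vV: "v \<in> V" and d: "deg E v > 2" by (auto simp: branching_vertices_def)
    have "deg E v = 3 \<or> deg E v = 4" using good_range2[OF g vV d] .
    moreover have "deg E v \<noteq> 3" using F3e[OF z vV] .
    ultimately show "v \<in> Fk V E 4" using vV by (simp add: Fk_def)
  qed
qed (auto simp: branching_vertices_def Fk_def)

lemma prime1: "eBB + 1 = int b \<Longrightarrow> \<forall>ps. internal_path V E ps \<longrightarrow> path_len ps = 1"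
  using P1[OF g] cB by auto

lemma prime5: "eFF + 1 = N 4 \<Longrightarrow> N 4 \<ge> 1 \<Longrightarrow>
  (\<exists>v\<in>V. deg E v = 4) \<and> is_tree {v\<in>V. deg E v = 4} {e\<in>E. e \<subseteq> {v\<in>V. deg E v = 4}}"
proof -
  assume a: "eFF + 1 = N 4" "N 4 \<ge> 1"
  have ne: "Fk V E 4 \<noteq> {}" using a by auto
  have "is_tree (Fk V E 4) (Esub E (Fk V E 4))"
    by (rule P5[OF t _ ne]) (use a in \<open>auto simp: Fk_def\<close>)
  thus ?thesis using ne by (auto simp: Fk_def Esub_def)
qed

lemma prime5r: "is_tree {v\<in>V. deg E v = 4} {e\<in>E. e \<subseteq> {v\<in>V. deg E v = 4}} \<Longrightarrow> eFF + 1 = N 4"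
proof -
  assume a: "is_tree {v\<in>V. deg E v = 4} {e\<in>E. e \<subseteq> {v\<in>V. deg E v = 4}}"
  hence "card (Esub E (Fk V E 4)) = card (Fk V E 4) - 1" "Fk V E 4 \<noteq> {}"
    by (auto simp: is_tree_def Esub_def Fk_def)
  moreover have "card (Fk V E 4) \<ge> 1" using calculation(2) fin_Fk[OF g, of 4] by (simp add: Suc_le_eq card_gt_0_iff)
  ultimately show ?thesis by simp
qed

lemma prime4: "eFF + 1 = N 4 \<Longrightarrow> \<forall>v\<in>V. deg E v = 3 \<longrightarrow> card {u\<in>V. {u, v} \<in> E \<and> deg E u = 4} \<le> 1"
  using P4[OF g] nbk[OF s] by auto

lemma prime4r: "\<forall>v\<in>V. deg E v = 3 \<longrightarrow> card {u\<in>V. {u, v} \<in> E \<and> deg E u = 4} \<le> 1 \<Longrightarrow> Q 3 4 \<le> N 3"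
proof -
  assume a: "\<forall>v\<in>V. deg E v = 3 \<longrightarrow> card {u\<in>V. {u, v} \<in> E \<and> deg E u = 4} \<le> 1"
  have "Pc V E 3 4 \<le> card (Fk V E 3)"
    by (rule Pc_bound1) (use a nbk[OF s] in \<open>auto simp: Fk_def\<close>)
  thus ?thesis by simp
qed

lemma adj_pos: "(\<exists>u\<in>V. \<exists>v\<in>V. {u, v} \<in> E \<and> deg E u = i \<and> deg E v = j) \<longleftrightarrow> Q i j > 0"
proof
  assume "\<exists>u\<in>V. \<exists>v\<in>V. {u, v} \<in> E \<and> deg E u = i \<and> deg E v = j"
  then obtain u v where uv: "u \<in> V" "v \<in> V" "{u, v} \<in> E" "deg E u = i" "deg E v = j" by blast
  have "Pc V E i j > 0" by (rule edge_Pc_pos[OF g uv(1,4)]) (use uv in \<open>auto simp: nb_def insert_commute\<close>)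
  thus "Q i j > 0" by simp
next
  assume "Q i j > 0"
  then obtain v u where vu: "v \<in> V" "deg E v = i" "deg E u = j" "u \<in> nb E v" using Pc_pos_edge[of V E i j] by auto
  have "u \<in> V" using vu nb_sub[OF s] by auto
  moreover have "{v, u} \<in> E" using vu by (simp add: nb_def insert_commute)
  ultimately show "\<exists>u\<in>V. \<exists>v\<in>V. {u, v} \<in> E \<and> deg E u = i \<and> deg E v = j" using vu by blast
qed

lemma leafbr: "(\<exists>u\<in>V. \<exists>v\<in>V. {u, v} \<in> E \<and> deg E u = 1 \<and> deg E v > 2) \<longleftrightarrow> (Q 1 3 > 0 \<or> Q 1 4 > 0)"
proof
  assume "\<exists>u\<in>V. \<exists>v\<in>V. {u, v} \<in> E \<and> deg E u = 1 \<and> deg E v > 2"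
  then obtain u v where uv: "u \<in> V" "v \<in> V" "{u, v} \<in> E" "deg E u = 1" "deg E v > 2" by blast
  hence "deg E v = 3 \<or> deg E v = 4" using good_range2[OF g] by blast
  thus "Q 1 3 > 0 \<or> Q 1 4 > 0" using adj_pos[of 1 3] adj_pos[of 1 4] uv by blast
next
  assume "Q 1 3 > 0 \<or> Q 1 4 > 0"
  thus "\<exists>u\<in>V. \<exists>v\<in>V. {u, v} \<in> E \<and> deg E u = 1 \<and> deg E v > 2"
    using adj_pos[of 1 3] adj_pos[of 1 4] by fastforce
qed

lemma nopend: "Q 2 2 = 0 \<Longrightarrow> \<not> (\<exists>ps. pendent_path V E ps \<and> path_len ps > 2)"
  using pend22[OF g] by fastforce

lemma p22le: "Q 2 2 \<le> 2 * N 2" using L.r2 L.nn by linarith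

lemma BT1_iff: "BT1 n b V E \<longleftrightarrow> N 4 = int b \<and> N 2 = int n - 3 * int b - 2 \<and> N 1 = 2 * int b + 2"
  using ct by (simp add: BT1_def ndeg)

lemma BT2_iff: "BT2 n b V E \<longleftrightarrow> N 4 = int n - 2 * int b - 2 \<and> N 3 = 3 * int b - int n + 2 \<and> N 1 = int n - int b"
  using ct by (simp add: BT2_def ndeg)

lemma bnd_real: "real b < real n / 2 - 1" using bn0 rc4 by simp

end

context TT begin

lemma no3_pc: "N 3 = 0 \<Longrightarrow> prime_conditions V E \<longleftrightarrow>
   (\<forall>ps. internal_path V E ps \<longrightarrow> path_len ps = 1) \<and>
   ((\<exists>u\<in>V. \<exists>v\<in>V. {u, v} \<in> E \<and> deg E u = 1 \<and> deg E v > 2) \<longrightarrow>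
        \<not> (\<exists>ps. pendent_path V E ps \<and> path_len ps > 2)) \<and>
   ((\<exists>v\<in>V. deg E v = 4) \<and>
        is_tree {v\<in>V. deg E v = 4} {e\<in>E. e \<subseteq> {v\<in>V. deg E v = 4}})"
  using F3e unfolding prime_conditions_def by blast

lemma case1:
  assumes c: "5 * int b \<le> int n - 4"
  shows "int (M2 E) = 4 * int n + 16 * int b - 12 \<longleftrightarrow> BT1' n b V E"
proof
  assume eq: "int (M2 E) = 4 * int n + 16 * int b - 12"
  have a: "N 3 = 0" "Q 1 4 = 0" "eBB + 1 = int b" using L.E1[OF eq] by auto
  have bt1: "BT1 n b V E" unfolding BT1_iff using a L.hn L.hb L.n1e by linarith
  have BF: "branching_vertices V E = Fk V E 4" using BF4[OF a(1)] .
  have p1: "\<forall>ps. internal_path V E ps \<longrightarrow> path_len ps = 1" using prime1[OF a(3)] .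
  have p3: "\<not> (\<exists>u\<in>V. \<exists>v\<in>V. {u, v} \<in> E \<and> deg E u = 1 \<and> deg E v > 2)"
    using leafbr a L.r3 L.nn by linarith
  have p5: "(\<exists>v\<in>V. deg E v = 4) \<and> is_tree {v\<in>V. deg E v = 4} {e\<in>E. e \<subseteq> {v\<in>V. deg E v = 4}}"
    by (rule prime5) (use a BF L.hb b1 in auto)
  show "BT1' n b V E" unfolding BT1'_def using bt1 no3_pc[OF a(1)] p1 p3 p5 by blast
next
  assume bt: "BT1' n b V E"
  have bt1: "N 4 = int b" "N 2 = int n - 3 * int b - 2" "N 1 = 2 * int b + 2"
    using bt BT1_iff by (auto simp: BT1'_def)
  have n3: "N 3 = 0" using bt1 L.hb by linarith
  have pc: "prime_conditions V E" using bt by (simp add: BT1'_def)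
  have p1: "\<forall>ps. internal_path V E ps \<longrightarrow> path_len ps = 1"
    and p3: "(\<exists>u\<in>V. \<exists>v\<in>V. {u, v} \<in> E \<and> deg E u = 1 \<and> deg E v > 2) \<longrightarrow>
        \<not> (\<exists>ps. pendent_path V E ps \<and> path_len ps > 2)"
    and p5: "is_tree {v\<in>V. deg E v = 4} {e\<in>E. e \<subseteq> {v\<in>V. deg E v = 4}}"
    using no3_pc[OF n3] pc by auto
  have eF: "eFF + 1 = N 4" using prime5r[OF p5] .
  have eB: "eBB + 1 = int b" using eF BF4[OF n3] bt1 by simp
  have q14: "Q 1 4 = 0"
  proof (rule ccontr)
    assume "Q 1 4 \<noteq> 0"
    hence pos: "Q 1 4 > 0" by simp
    hence nop: "\<not> (\<exists>ps. pendent_path V E ps \<and> path_len ps > 2)" using p3 leafbr by blast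
    have q22: "Q 2 2 = 0"
    proof (rule ccontr)
      assume "Q 2 2 \<noteq> 0"
      hence "Pc V E 2 2 > 0" by simp
      then obtain ps where ps: "internal_path V E ps \<or> pendent_path V E ps" "path_len ps \<ge> 3"
        using edge22_path[OF g] by blast
      thus False using p1 nop by fastforce
    qed
    have "Pc V E 2 1 \<le> card (Fk V E 2)" by (rule Pc_bound1) (rule leaf2[OF g])
    hence q12: "Q 1 2 \<le> N 2" using symk[of 2 1] by simp
    have "Pc V E 2 4 \<le> card (Fk V E 2)" by (rule Pc_bound1) (rule br2[OF g p1])
    hence q24: "Q 2 4 \<le> N 2" by simp
    have "Q 1 4 = 0" by (rule L.C1[OF c n3 q22 q12 q24])
    thus False using pos by simp
  qed
  show "int (M2 E) = 4 * int n + 16 * int b - 12" by (rule L.E1r[OF n3 q14 eB])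
qed

lemma case2:
  assumes c: "5 * int b > int n - 4" and c2: "3 * int b < int n - 2"
  shows "int (M2 E) = 6 * int n + 6 * int b - 20 \<longleftrightarrow> BT1' n b V E"
proof
  assume eq: "int (M2 E) = 6 * int n + 6 * int b - 20"
  have a: "N 3 = 0" "Q 2 2 = 0" "eBB + 1 = int b" using L.E2[OF eq] by auto
  have bt1: "BT1 n b V E" unfolding BT1_iff using a L.hn L.hb L.n1e by linarith
  have BF: "branching_vertices V E = Fk V E 4" using BF4[OF a(1)] .
  have p1: "\<forall>ps. internal_path V E ps \<longrightarrow> path_len ps = 1" using prime1[OF a(3)] .
  have p3: "\<not> (\<exists>ps. pendent_path V E ps \<and> path_len ps > 2)" using nopend[OF a(2)] .
  have p5: "(\<exists>v\<in>V. deg E v = 4) \<and> is_tree {v\<in>V. deg E v = 4} {e\<in>E. e \<subseteq> {v\<in>V. deg E v = 4}}"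
    by (rule prime5) (use a BF L.hb b1 in auto)
  show "BT1' n b V E" unfolding BT1'_def using bt1 no3_pc[OF a(1)] p1 p3 p5 by blast
next
  assume bt: "BT1' n b V E"
  have bt1: "N 4 = int b" "N 2 = int n - 3 * int b - 2" "N 1 = 2 * int b + 2"
    using bt BT1_iff by (auto simp: BT1'_def)
  have n3: "N 3 = 0" using bt1 L.hb by linarith
  have pc: "prime_conditions V E" using bt by (simp add: BT1'_def)
  have p1: "\<forall>ps. internal_path V E ps \<longrightarrow> path_len ps = 1"
    and p3: "(\<exists>u\<in>V. \<exists>v\<in>V. {u, v} \<in> E \<and> deg E u = 1 \<and> deg E v > 2) \<longrightarrow>
        \<not> (\<exists>ps. pendent_path V E ps \<and> path_len ps > 2)"
    and p5: "is_tree {v\<in>V. deg E v = 4} {e\<in>E. e \<subseteq> {v\<in>V. deg E v = 4}}"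
    using no3_pc[OF n3] pc by auto
  have eF: "eFF + 1 = N 4" using prime5r[OF p5] .
  have eB: "eBB + 1 = int b" using eF BF4[OF n3] bt1 by simp
  have q22: "Q 2 2 = 0"
  proof (rule ccontr)
    assume "Q 2 2 \<noteq> 0"
    hence "Pc V E 2 2 > 0" by simp
    then obtain ps where ps: "internal_path V E ps \<or> pendent_path V E ps" "path_len ps \<ge> 3"
      using edge22_path[OF g] by blast
    have "\<not> internal_path V E ps" using p1 ps by fastforce
    hence "pendent_path V E ps \<and> path_len ps > 2" using ps by auto
    hence "Q 1 4 = 0" using p3 leafbr L.nn by fastforce
    moreover have "Pc V E 2 1 \<le> card (Fk V E 2)" by (rule Pc_bound1) (rule leaf2[OF g])
    hence q12: "Q 1 2 \<le> N 2" using symk[of 2 1] by simp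
    ultimately show False using L.C2[OF c n3 bt1(1)] by blast
  qed
  show "int (M2 E) = 6 * int n + 6 * int b - 20" by (rule L.E2r[OF n3 q22 eB])
qed

lemma case3:
  assumes c: "3 * int b \<ge> int n - 2" and c2: "7 * int b < 3 * int n - 4"
  shows "int (M2 E) = 10 * int n - 6 * int b - 28 \<longleftrightarrow> BT2' n b V E"
proof
  assume eq: "int (M2 E) = 10 * int n - 6 * int b - 28"
  have a: "N 2 = 0" "Q 3 3 = 0" "eBB + 1 = int b" "eFF + 1 = N 4" "N 4 \<ge> 1" using L.E3[OF eq] by auto
  have bt2: "BT2 n b V E" unfolding BT2_iff using a L.hn L.hb L.n1e by linarith
  have p1: "\<forall>ps. internal_path V E ps \<longrightarrow> path_len ps = 1" using prime1[OF a(3)] .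
  have p2: "\<not> (\<exists>u\<in>V. \<exists>v\<in>V. {u, v} \<in> E \<and> deg E u = 3 \<and> deg E v = 3)" proof -
    have "\<not> Q 3 3 > 0" using a by simp
    thus ?thesis using adj_pos[of 3 3] by blast
  qed
  have p3: "\<not> (\<exists>ps. pendent_path V E ps \<and> path_len ps > 2)" using nopend p22le a L.nn by fastforce
  have p4: "\<forall>v\<in>V. deg E v = 3 \<longrightarrow> card {u\<in>V. {u, v} \<in> E \<and> deg E u = 4} \<le> 1" using prime4[OF a(4)] .
  have p5: "(\<exists>v\<in>V. deg E v = 4) \<and> is_tree {v\<in>V. deg E v = 4} {e\<in>E. e \<subseteq> {v\<in>V. deg E v = 4}}"
    by (rule prime5[OF a(4,5)])
  show "BT2' n b V E" unfolding BT2'_def prime_conditions_def using bt2 p1 p2 p3 p4 p5 by blast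
next
  assume bt: "BT2' n b V E"
  have bt2: "N 4 = int n - 2 * int b - 2" "N 3 = 3 * int b - int n + 2" "N 1 = int n - int b"
    using bt BT2_iff by (auto simp: BT2'_def)
  have n2: "N 2 = 0" using bt2 L.hn by linarith
  have pc: "prime_conditions V E" using bt by (simp add: BT2'_def)
  have p2: "(\<exists>u\<in>V. \<exists>v\<in>V. {u, v} \<in> E \<and> deg E u = 1 \<and> deg E v = 4) \<longrightarrow>
        \<not> (\<exists>u\<in>V. \<exists>v\<in>V. {u, v} \<in> E \<and> deg E u = 3 \<and> deg E v = 3)"
    and p4: "\<forall>v\<in>V. deg E v = 3 \<longrightarrow> card {u\<in>V. {u, v} \<in> E \<and> deg E u = 4} \<le> 1"
    and p5: "is_tree {v\<in>V. deg E v = 4} {e\<in>E. e \<subseteq> {v\<in>V. deg E v = 4}}"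
    using pc unfolding prime_conditions_def by blast+
  have eF: "eFF + 1 = N 4" using prime5r[OF p5] .
  have eB: "eBB + 1 = int b" using L.BT2eB[OF n2] .
  have q33: "Q 3 3 = 0"
  proof (rule ccontr)
    assume "Q 3 3 \<noteq> 0"
    hence "Q 3 3 > 0" by simp
    hence "Q 1 4 = 0" using p2 adj_pos[of 3 3] adj_pos[of 1 4] L.nn by fastforce
    thus False using L.C3[OF c2 n2 eF _ prime4r[OF p4]] by blast
  qed
  show "int (M2 E) = 10 * int n - 6 * int b - 28" by (rule L.E3r[OF n2 q33 eB eF])
qed

lemma case4:
  assumes c: "7 * int b \<ge> 3 * int n - 4"
  shows "int (M2 E) = 16 * int n - 20 * int b - 36 \<longleftrightarrow> BT2' n b V E"
proof
  assume eq: "int (M2 E) = 16 * int n - 20 * int b - 36"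
  have a: "N 2 = 0" "Q 1 4 = 0" "eBB + 1 = int b" "eFF + 1 = N 4" "N 4 \<ge> 1" using L.E4[OF eq] by auto
  have bt2: "BT2 n b V E" unfolding BT2_iff using a L.hn L.hb L.n1e by linarith
  have p1: "\<forall>ps. internal_path V E ps \<longrightarrow> path_len ps = 1" using prime1[OF a(3)] .
  have p2: "\<not> (\<exists>u\<in>V. \<exists>v\<in>V. {u, v} \<in> E \<and> deg E u = 1 \<and> deg E v = 4)" proof -
    have "\<not> Q 1 4 > 0" using a by simp
    thus ?thesis using adj_pos[of 1 4] by blast
  qed
  have p3: "\<not> (\<exists>ps. pendent_path V E ps \<and> path_len ps > 2)" using nopend p22le a L.nn by fastforce
  have p4: "\<forall>v\<in>V. deg E v = 3 \<longrightarrow> card {u\<in>V. {u, v} \<in> E \<and> deg E u = 4} \<le> 1" using prime4[OF a(4)] .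
  have p5: "(\<exists>v\<in>V. deg E v = 4) \<and> is_tree {v\<in>V. deg E v = 4} {e\<in>E. e \<subseteq> {v\<in>V. deg E v = 4}}"
    by (rule prime5[OF a(4,5)])
  show "BT2' n b V E" unfolding BT2'_def prime_conditions_def using bt2 p1 p2 p3 p4 p5 by blast
next
  assume bt: "BT2' n b V E"
  have bt2: "N 4 = int n - 2 * int b - 2" "N 3 = 3 * int b - int n + 2" "N 1 = int n - int b"
    using bt BT2_iff by (auto simp: BT2'_def)
  have n2: "N 2 = 0" using bt2 L.hn by linarith
  have pc: "prime_conditions V E" using bt by (simp add: BT2'_def)
  have p2: "(\<exists>u\<in>V. \<exists>v\<in>V. {u, v} \<in> E \<and> deg E u = 1 \<and> deg E v = 4) \<longrightarrow>
        \<not> (\<exists>u\<in>V. \<exists>v\<in>V. {u, v} \<in> E \<and> deg E u = 3 \<and> deg E v = 3)"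
    and p5: "is_tree {v\<in>V. deg E v = 4} {e\<in>E. e \<subseteq> {v\<in>V. deg E v = 4}}"
    using pc unfolding prime_conditions_def by blast+
  have eF: "eFF + 1 = N 4" using prime5r[OF p5] .
  have eB: "eBB + 1 = int b" using L.BT2eB[OF n2] .
  have q14: "Q 1 4 = 0"
  proof (rule ccontr)
    assume "Q 1 4 \<noteq> 0"
    hence "Q 1 4 > 0" by simp
    hence "Q 3 3 = 0" using p2 adj_pos[of 3 3] adj_pos[of 1 4] L.nn by fastforce
    thus False using L.C4[OF c n2 eF] \<open>Q 1 4 > 0\<close> by blast
  qed
  show "int (M2 E) = 16 * int n - 20 * int b - 36" by (rule L.E4r[OF n2 q14 eB eF])
qed

lemma main:
  "int (M2 E) \<le> M2_bound n b \<and>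
    (real b < (real n - 2) / 3 \<longrightarrow> (int (M2 E) = M2_bound n b \<longleftrightarrow> BT1' n b V E)) \<and>
    ((real n - 2) / 3 \<le> real b \<longrightarrow> (int (M2 E) = M2_bound n b \<longleftrightarrow> BT2' n b V E))"
proof -
  have bnd: "int (M2 E) \<le> M2_bound n b"
    unfolding M2_bound_def rc1 rc2 rc3 using L.B1 L.B2 L.B3 L.B4 by simp
  have e1: "int (M2 E) = M2_bound n b \<longleftrightarrow> BT1' n b V E" if "real b < (real n - 2) / 3"
  proof -
    have c2: "3 * int b < int n - 2" using that rc2 by simp
    show ?thesis
    proof (cases "5 * int b \<le> int n - 4")
      case True
      hence "M2_bound n b = 4 * int n + 16 * int b - 12" unfolding M2_bound_def rc1 by simp
      thus ?thesis using case1[OF True] by simp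
    next
      case False
      hence "M2_bound n b = 6 * int n + 6 * int b - 20" unfolding M2_bound_def rc1 rc2 using c2 by simp
      thus ?thesis using case2[OF _ c2] False by simp
    qed
  qed
  have e2: "int (M2 E) = M2_bound n b \<longleftrightarrow> BT2' n b V E" if "(real n - 2) / 3 \<le> real b"
  proof -
    have c2: "\<not> 3 * int b < int n - 2" using that rc2 by (simp add: not_less)
    have "int b \<ge> 1" using b1 by simp
    hence c1: "\<not> 5 * int b \<le> int n - 4" using c2 by linarith
    show ?thesis
    proof (cases "7 * int b < 3 * int n - 4")
      case True
      hence "M2_bound n b = 10 * int n - 6 * int b - 28" unfolding M2_bound_def rc1 rc2 rc3 using c1 c2 by simp
      thus ?thesis using case3[OF _ True] c2 by simp
    next
      case False
      hence "M2_bound n b = 16 * int n - 20 * int b - 36" unfolding M2_bound_def rc1 rc2 rc3 using c1 c2 by simp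
      thus ?thesis using case4 False by simp
    qed
  qed
  show ?thesis using bnd e1 e2 by blast
qed

end

theorem theorem4:
  fixes V :: "'a set" and E :: "'a set set" and n b :: nat
  assumes "1 \<le> b" and "real b < real n / 2 - 1"
    and "CT_star n b V E"
  shows "int (M2 E) \<le> M2_bound n b \<and>
    (real b < (real n - 2) / 3 \<longrightarrow> (int (M2 E) = M2_bound n b \<longleftrightarrow> BT1' n b V E)) \<and>
    ((real n - 2) / 3 \<le> real b \<longrightarrow> (int (M2 E) = M2_bound n b \<longleftrightarrow> BT2' n b V E))"
proof -
  interpret TT V E n b
    by unfold_locales (use assms rc4 in auto)
  show ?thesis by (rule main)
qed


end
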